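(* Consider the following network model. Let $q$ be a prime power, $K\ge1$, $L\ge1$, $N_{\mathrm S}\ge K$, $N_{\mathrm R}\ge1$. A source S draws $N_{\mathrm S}$ coefficient vectors i.i.d. uniformly from $\mathbb{F}_q^K$ and broadcasts one packet per vector. Each packet is received by the destination D and by each relay $\mathrm R_j$ ($j=1,\dots,L$) according to erasure events that are independent of the coefficients. Relay $\mathrm R_j$, having received $m_j$ packets with coefficient matrix $\mathbf{C}_{\mathrm S\to\mathrm R_j}\in\mathbb{F}_q^{m_j\times K}$, draws $\mathbf{G}_j\in\mathbb{F}_q^{N_{\mathrm R}\times m_j}$ with i.i.d. uniform entries (independent of everything else) and transmits the $N_{\mathrm R}$ rows of $\mathbf{G}_j\mathbf{C}_{\mathrm S\to\mathrm R_j}$; D receives $m'_j$ of them. D stacks the $m_{\mathrm D}$ coefficient vectors received directly from S and all $m'=\sum_j m'_j$ recoded vectors received from the relays into the matrix $\mathbf{C}_{\mathrm D}$. Let $m$ be the number of distinct source packets received by at least one relay and $m_{\mathrm{RD}}$ the number of those also received by D. Let $X$ be the event $\operatorname{rank}(\mathbf{C}_{\mathrm D})=K$. Then, conditional on the erasure pattern (so that $m,m_{\mathrm D},m_{\mathrm{RD}},m'_1,\dots,m'_L$ are fixed), $$\Pr[X]\le \mathbb{P}^{(2)}\big(m'+m_{\mathrm D},\; m-m_{\mathrm{RD}}+m_{\mathrm D},\; m_{\mathrm D};\,K\big),$$ where for nonnegative integers $m_1,m_2\ge m_{12}$, $$\mathbb{P}^{(2)}(m_1,m_2,m_{12};K)=\sum_{i=\max(0,\,K-m_1+m_{12},\,K-m_2+m_{12})}^{\min(m_{12},K)}\mathbb{P}_i(m_{12},K)\,\mathbb{P}(m_1-m_{12},K-i)\,\mathbb{P}(m_2-m_{12},K-i),$$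 with $\mathbb{P}(a,b)=\prod_{i=0}^{b-1}(1-q^{i-a})$ and $\mathbb{P}_r(a,b)=q^{-a(b-r)}\prod_{i=0}^{r-1}\frac{q^{b-i}-1}{q^{r-i}-1}\prod_{i=0}^{r-1}(1-q^{i-a})$.
   Context: $\mathbb{P}(a,b)$ is the probability that an $a\times b$ matrix with i.i.d. uniform entries over $\mathbb{F}_q$ has rank $b$, and $\mathbb{P}_r(a,b)$ the probability it has rank $r$. $\mathbb{P}^{(2)}(m_1,m_2,m_{12};K)$ is the probability that two uniformly random matrices with $m_1$ and $m_2$ rows and $K$ columns, sharing exactly $m_{12}$ common rows, are simultaneously of rank $K$. *)

theory Defs
  imports "Jordan_Normal_Form.DL_Rank_Submatrix"
begin

text \<open>Probability that an a x b uniform random matrix over F_q has rank b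
  (q = field size).\<close>
definition Pfull :: "nat \<Rightarrow> nat \<Rightarrow> nat \<Rightarrow> real" where
  "Pfull q a b = (\<Prod>i<b. 1 - (real q) powi (int i - int a))"

text \<open>Probability that an a x b uniform random matrix over F_q has rank r.\<close>
definition Prank :: "nat \<Rightarrow> nat \<Rightarrow> nat \<Rightarrow> nat \<Rightarrow> real" where
  "Prank q r a b = (real q) powi (- (int a * (int b - int r)))
     * (\<Prod>i<r. ((real q) ^ (b - i) - 1) / ((real q) ^ (r - i) - 1))
     * (\<Prod>i<r. 1 - (real q) powi (int i - int a))"

definition P2 :: "nat \<Rightarrow> nat \<Rightarrow> nat \<Rightarrow> nat \<Rightarrow> nat \<Rightarrow> real" where
  "P2 q m1 m2 m12 K =
     (\<Sum>i\<in>{i. i \<le> min m12 K \<and> int K - int m1 + int m12 \<le> int i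
                \<and> int K - int m2 + int m12 \<le> int i}.
        Prank q i m12 K * Pfull q (m1 - m12) (K - i) * Pfull q (m2 - m12) (K - i))"

text \<open>Coefficient matrix of relay j: the rows of C indexed by the source packets
  received by relay j (in increasing order).\<close>
definition relay_in :: "'a::field mat \<Rightarrow> nat set \<Rightarrow> 'a mat" where
  "relay_in C S = submatrix C S UNIV"

text \<open>Matrix C_D at the destination: rows of C received directly (index set DS),
  stacked on the rows of G_j * C_{S->R_j} received from relay j (index set RD j),
  for j = 0..L-1.\<close>
definition dest_mat ::
  "nat \<Rightarrow> nat \<Rightarrow> nat set \<Rightarrow> (nat \<Rightarrow> nat set) \<Rightarrow> (nat \<Rightarrow> nat set)
     \<Rightarrow> 'a::field mat \<Rightarrow> (nat \<Rightarrow> 'a mat) \<Rightarrow> 'a mat" where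
  "dest_mat K L DS RS RD C G =
     submatrix C DS UNIV @\<^sub>r
     foldr (\<lambda>j M. submatrix (G j * relay_in C (RS j)) (RD j) UNIV @\<^sub>r M) [0..<L] (0\<^sub>m 0 K)"

text \<open>Sample space given the erasure pattern: the source coefficient matrix C
  (NS x K, uniform) and the relay coding matrices G_j (NR x m_j, uniform),
  all independent, i.e. uniform on the product.\<close>
definition outcomes ::
  "nat \<Rightarrow> nat \<Rightarrow> nat \<Rightarrow> nat \<Rightarrow> (nat \<Rightarrow> nat set) \<Rightarrow> ('a::field mat \<times> (nat \<Rightarrow> 'a mat)) set" where
  "outcomes K L NS NR RS =
     carrier_mat NS K \<times> (\<Pi>\<^sub>E j\<in>{..<L}. carrier_mat NR (card (RS j)))"

definition prob_X ::
  "'a::{field,finite} itself \<Rightarrow> nat \<Rightarrow> nat \<Rightarrow> nat \<Rightarrow> nat \<Rightarrow> nat set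
     \<Rightarrow> (nat \<Rightarrow> nat set) \<Rightarrow> (nat \<Rightarrow> nat set) \<Rightarrow> real" where
  "prob_X TYPE('a) K L NS NR DS RS RD =
     real (card {(C, G) \<in> (outcomes K L NS NR RS :: ('a mat \<times> (nat \<Rightarrow> 'a mat)) set).
                   (let CD = dest_mat K L DS RS RD C G in vec_space.rank (dim_row CD) CD = K)})
     / real (card (outcomes K L NS NR RS :: ('a mat \<times> (nat \<Rightarrow> 'a mat)) set))"

end

theory Submission
  imports Defs
begin

lemma card_carrier_vec_fin:
  "finite (carrier_vec n :: 'a::finite vec set) \<and> card (carrier_vec n :: 'a::finite vec set) = card (UNIV::'a set) ^ n"
proof -
  have h1: "\<forall>a\<in>carrier_vec n. vec n (\<lambda>i\<in>{..<n}. a $ i) = (a :: 'a vec)"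
    by (auto intro!: eq_vecI)
  have h2: "\<forall>a'\<in>PiE {..<n} (\<lambda>_. (UNIV::'a set)). (\<lambda>i\<in>{..<n}. vec n a' $ i) = a'"
  proof (intro ballI ext)
    fix a' i assume a: "a' \<in> PiE {..<n} (\<lambda>_. (UNIV::'a set))"
    show "(\<lambda>i\<in>{..<n}. vec n a' $ i) i = a' i"
      by (cases "i < n") (simp_all add: PiE_arb[OF a])
  qed
  have h3: "(\<lambda>v. \<lambda>i\<in>{..<n}. v $ i) ` (carrier_vec n :: 'a vec set) \<subseteq> PiE {..<n} (\<lambda>_. UNIV)"
    by (intro image_subsetI) (simp only: restrict_PiE_iff, simp)
  have h4: "(\<lambda>f. vec n f) ` PiE {..<n} (\<lambda>_. UNIV) \<subseteq> (carrier_vec n :: 'a vec set)" by (intro image_subsetI vec_carrier)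
  have bij: "bij_betw (\<lambda>v. \<lambda>i\<in>{..<n}. v $ i) (carrier_vec n :: 'a vec set) (PiE {..<n} (\<lambda>_. UNIV))"
    using bij_betw_byWitness[OF h1 h2 h3 h4] .
  have "finite (PiE {..<n} (\<lambda>_. (UNIV::'a set)))" by (rule finite_PiE) auto
  moreover have "card (PiE {..<n} (\<lambda>_. (UNIV::'a set))) = card (UNIV::'a set) ^ n" by (simp add: card_PiE)
  ultimately show ?thesis using bij bij_betw_finite bij_betw_same_card by metis
qed

lemma finite_cv[simp]: "finite (carrier_vec n :: 'a::finite vec set)"
  using card_carrier_vec_fin by blast
lemma card_cv: "card (carrier_vec n :: 'a::finite vec set) = card (UNIV::'a set) ^ n"
  using card_carrier_vec_fin by blast

lemma vec_cancel1: "v \<in> carrier_vec n \<Longrightarrow> u \<in> carrier_vec n \<Longrightarrow> (v + a \<cdot>\<^sub>v u) + (- a) \<cdot>\<^sub>v u = (v :: 'a::field vec)"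
  by (intro eq_vecI) auto
lemma vec_cancel2: "v \<in> carrier_vec n \<Longrightarrow> u \<in> carrier_vec n \<Longrightarrow> (v + (- a) \<cdot>\<^sub>v u) + a \<cdot>\<^sub>v u = (v :: 'a::field vec)"
  by (intro eq_vecI) auto

definition subsp :: "nat \<Rightarrow> 'a::field vec set \<Rightarrow> bool" where
  "subsp n W \<longleftrightarrow> W \<subseteq> carrier_vec n \<and> 0\<^sub>v n \<in> W \<and> (\<forall>x\<in>W. \<forall>y\<in>W. x + y \<in> W) \<and> (\<forall>a. \<forall>x\<in>W. a \<cdot>\<^sub>v x \<in> W)"

lemma lin_split:
  fixes W :: "'a::{field,finite} vec set" and \<phi> :: "'a vec \<Rightarrow> 'a"
  assumes S: "subsp n W"
    and add: "\<And>x y. x \<in> W \<Longrightarrow> y \<in> W \<Longrightarrow> \<phi> (x + y) = \<phi> x + \<phi> y"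
    and hom: "\<And>a x. x \<in> W \<Longrightarrow> \<phi> (a \<cdot>\<^sub>v x) = a * \<phi> x"
    and uu: "uu \<in> W" "\<phi> uu \<noteq> 0"
  shows "card W = card {x\<in>W. \<phi> x = 0} * card (UNIV::'a set)"
proof -
  let ?Z = "{x\<in>W. \<phi> x = 0}"
  have WC: "W \<subseteq> carrier_vec n" using S by (simp add: subsp_def)
  have cl_add: "\<And>x y. x \<in> W \<Longrightarrow> y \<in> W \<Longrightarrow> x + y \<in> W" and cl_sm: "\<And>a x. x \<in> W \<Longrightarrow> a \<cdot>\<^sub>v x \<in> W"
    using S by (auto simp: subsp_def)
  have uuc: "uu \<in> carrier_vec n" using uu WC by auto
  define f where "f = (\<lambda>(z::'a vec, a::'a). z + a \<cdot>\<^sub>v uu)"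
  define g where "g = (\<lambda>w. (w + (- (\<phi> w / \<phi> uu)) \<cdot>\<^sub>v uu, \<phi> w / \<phi> uu))"
  have "bij_betw f (?Z \<times> UNIV) W"
  proof (rule bij_betw_byWitness[where f'=g])
    show "\<forall>p\<in>?Z \<times> UNIV. g (f p) = p"
    proof
      fix p assume p: "p \<in> ?Z \<times> (UNIV::'a set)"
      obtain z a where pz: "p = (z,a)" by (cases p)
      have z: "z \<in> W" "\<phi> z = 0" using p pz by auto
      have zc: "z \<in> carrier_vec n" using z WC by auto
      have phi: "\<phi> (z + a \<cdot>\<^sub>v uu) = a * \<phi> uu" using add[OF z(1) cl_sm[OF uu(1)]] hom[OF uu(1)] z by simp
      have "(z + a \<cdot>\<^sub>v uu) + (- a) \<cdot>\<^sub>v uu = z"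
        using zc uuc by (rule vec_cancel1)
      then show "g (f p) = p" using phi uu pz by (simp add: f_def g_def)
    qed
    show "\<forall>w\<in>W. f (g w) = w"
    proof
      fix w assume w: "w \<in> W"
      have wc: "w \<in> carrier_vec n" using w WC by auto
      show "f (g w) = w" unfolding f_def g_def using vec_cancel2[OF wc uuc] by simp
    qed
    show "f ` (?Z \<times> UNIV) \<subseteq> W" using cl_add cl_sm uu by (auto simp: f_def)
    show "g ` W \<subseteq> ?Z \<times> UNIV"
    proof
      fix y assume "y \<in> g ` W"
      then obtain w where w: "w \<in> W" and y: "y = g w" by auto
      have m: "(- (\<phi> w / \<phi> uu)) \<cdot>\<^sub>v uu \<in> W" using cl_sm uu by auto
      have "\<phi> (w + (- (\<phi> w / \<phi> uu)) \<cdot>\<^sub>v uu) = 0"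
        using add[OF w m] hom[OF uu(1)] uu(2) by simp
      then show "y \<in> ?Z \<times> UNIV" using y cl_add[OF w m] by (simp add: g_def)
    qed
  qed
  then have "card W = card (?Z \<times> (UNIV::'a set))" by (rule bij_betw_same_card[symmetric])
  then show ?thesis by (simp add: card_cartesian_product)
qed

lemma subsp_carrier: "subsp n (carrier_vec n :: 'a::field vec set)"
  by (auto simp: subsp_def)

lemma subsp_finite: "subsp n (W :: 'a::{field,finite} vec set) \<Longrightarrow> finite W"
  unfolding subsp_def using finite_cv finite_subset by blast

lemma card_field_ge2: "card (UNIV :: 'a::{field,finite} set) \<ge> 2"
proof -
  have "{0::'a, 1} \<subseteq> UNIV" by auto
  then have "card {0::'a, 1} \<le> card (UNIV :: 'a set)" by (intro card_mono) auto
  then show ?thesis by simp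
qed

lemma nonzero_vec_index:
  assumes "x \<in> carrier_vec n" "x \<noteq> 0\<^sub>v n"
  shows "\<exists>i<n. x $ i \<noteq> 0"
proof (rule ccontr)
  assume "\<not> ?thesis"
  then have "x = 0\<^sub>v n" using assms by (intro eq_vecI) auto
  then show False using assms by simp
qed

lemma card_filter_sum: "finite A \<Longrightarrow> card {x\<in>A. P x} = (\<Sum>x\<in>A. if P x then 1 else (0::nat))"
  by (simp add: sum.If_cases Int_def)

lemma sum_if_split:
  fixes a b :: "'b::comm_semiring_1"
  assumes "finite A" "B \<subseteq> A"
  shows "(\<Sum>x\<in>A. if x \<in> B then a else b) = of_nat (card B) * a + of_nat (card (A - B)) * b"
proof -
  have "(\<Sum>x\<in>A. if x \<in> B then a else b) = (\<Sum>x\<in>B. a) + (\<Sum>x\<in>A - B. b)"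
  proof -
    have "(\<Sum>x\<in>A. if x \<in> B then a else b) = (\<Sum>x\<in>A \<inter> {x. x \<in> B}. a) + (\<Sum>x\<in>A \<inter> - {x. x \<in> B}. b)"
      using assms(1) by (rule sum.If_cases)
    moreover have "A \<inter> {x. x \<in> B} = B" using assms(2) by auto
    moreover have "A \<inter> - {x. x \<in> B} = A - B" by auto
    ultimately show ?thesis by simp
  qed
  then show ?thesis by (simp add: mult.commute)
qed

lemma dual_card:
  fixes W :: "'a::{field,finite} vec set"
  assumes S: "subsp n W"
  shows "card {g\<in>carrier_vec n. \<forall>x\<in>W. g \<bullet> x = 0} * card W = card (UNIV::'a set) ^ n"
proof -
  let ?q = "card (UNIV::'a set)"
  let ?V = "carrier_vec n :: 'a vec set"
  let ?Wp = "{g\<in>carrier_vec n. \<forall>x\<in>W. g \<bullet> x = 0}"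
  have WC: "W \<subseteq> ?V" and W0: "0\<^sub>v n \<in> W" using S by (auto simp: subsp_def)
  have finW: "finite W" using subsp_finite[OF S] .
  have q2: "?q \<ge> 2" by (rule card_field_ge2)
  define P where "P = Sigma ?V (\<lambda>g. {x\<in>W. g \<bullet> x = 0})"
  have finP: "finite P" unfolding P_def using finW by (intro finite_SigmaI) auto
  have cP1: "card P = (\<Sum>g\<in>?V. card {x\<in>W. g \<bullet> x = 0})"
    unfolding P_def using finW by (intro card_SigmaI) auto
  have "bij_betw (\<lambda>(g,x). (x,g)) P (Sigma W (\<lambda>x. {g\<in>?V. g \<bullet> x = 0}))"
    unfolding P_def by (rule bij_betwI[where g="\<lambda>(x,g). (g,x)"]) auto
  then have "card P = card (Sigma W (\<lambda>x. {g\<in>?V. g \<bullet> x = 0}))" by (rule bij_betw_same_card)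
  also have "\<dots> = (\<Sum>x\<in>W. card {g\<in>?V. g \<bullet> x = 0})" using finW by (intro card_SigmaI) auto
  finally have cP2: "card P = (\<Sum>x\<in>W. card {g\<in>?V. g \<bullet> x = 0})" .
  have g_count: "?q * card {x\<in>W. g \<bullet> x = 0} = (if g \<in> ?Wp then ?q * card W else card W)"
    if g: "g \<in> ?V" for g
  proof (cases "g \<in> ?Wp")
    case True
    then have "{x\<in>W. g \<bullet> x = 0} = W" by auto
    then show ?thesis using True by simp
  next
    case False
    then obtain w0 where w0: "w0 \<in> W" "g \<bullet> w0 \<noteq> 0" using g by auto
    have "card W = card {x\<in>W. g \<bullet> x = 0} * ?q"
    proof (rule lin_split[OF S, where \<phi>="\<lambda>x. g \<bullet> x" and uu=w0])
      fix x y assume "x \<in> W" "y \<in> W"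
      then show "g \<bullet> (x + y) = g \<bullet> x + g \<bullet> y" using WC g by (intro scalar_prod_add_distrib) auto
    next
      fix a x assume "x \<in> W"
      then show "g \<bullet> (a \<cdot>\<^sub>v x) = a * (g \<bullet> x)" using WC g by auto
    next
      show "w0 \<in> W" by (rule w0)
      show "g \<bullet> w0 \<noteq> 0" by (rule w0)
    qed
    then have "?q * card {x\<in>W. g \<bullet> x = 0} = card W" by (simp add: mult.commute)
    then show ?thesis using False by (simp only: if_False)
  qed
  have x_count: "?q * card {g\<in>?V. g \<bullet> x = 0} = (if x = 0\<^sub>v n then ?q * ?q ^ n else ?q ^ n)"
    if x: "x \<in> W" for x
  proof (cases "x = 0\<^sub>v n")
    case True
    then have "{g\<in>?V. g \<bullet> x = 0} = ?V" by auto
    then show ?thesis using True by (simp add: card_cv)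
  next
    case False
    have xc: "x \<in> ?V" using x WC by auto
    obtain i where i: "i < n" "x $ i \<noteq> 0" using nonzero_vec_index[OF xc False] by auto
    have "card ?V = card {g\<in>?V. g \<bullet> x = 0} * ?q"
    proof (rule lin_split[OF subsp_carrier, where \<phi>="\<lambda>g. g \<bullet> x" and uu="unit_vec n i"])
      fix y z assume "y \<in> ?V" "z \<in> ?V"
      then show "(y + z) \<bullet> x = y \<bullet> x + z \<bullet> x" using xc by (intro add_scalar_prod_distrib) auto
    next
      fix a y assume "y \<in> ?V"
      then show "(a \<cdot>\<^sub>v y) \<bullet> x = a * (y \<bullet> x)" using xc by auto
    next
      show "unit_vec n i \<in> ?V" by simp
      show "unit_vec n i \<bullet> x \<noteq> 0" using i xc by simp
    qed
    then show ?thesis using False by (simp add: card_cv)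
  qed
  have sum1: "?q * card P = card ?Wp * (?q * card W) + (?q ^ n - card ?Wp) * card W"
  proof -
    have "?q * card P = (\<Sum>g\<in>?V. ?q * card {x\<in>W. g \<bullet> x = 0})" by (simp add: cP1 sum_distrib_left)
    also have "\<dots> = (\<Sum>g\<in>?V. if g \<in> ?Wp then ?q * card W else card W)"
      using g_count by (intro sum.cong) auto
    also have "\<dots> = card ?Wp * (?q * card W) + card (?V - ?Wp) * card W"
      by (subst sum_if_split) auto
    also have "card (?V - ?Wp) = ?q ^ n - card ?Wp" by (subst card_Diff_subset) (auto simp: card_cv)
    finally show ?thesis .
  qed
  have sum2: "?q * card P = ?q * ?q ^ n + (card W - 1) * ?q ^ n"
  proof -
    have "?q * card P = (\<Sum>x\<in>W. ?q * card {g\<in>?V. g \<bullet> x = 0})" by (simp add: cP2 sum_distrib_left)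
    also have "\<dots> = (\<Sum>x\<in>W. if x = 0\<^sub>v n then ?q * ?q ^ n else ?q ^ n)"
      using x_count by (intro sum.cong) auto
    also have "\<dots> = (\<Sum>x\<in>insert (0\<^sub>v n) (W - {0\<^sub>v n}). if x = 0\<^sub>v n then ?q * ?q ^ n else ?q ^ n)"
      using W0 by (simp add: insert_absorb)
    also have "\<dots> = ?q * ?q ^ n + (\<Sum>x\<in>W - {0\<^sub>v n}. if x = 0\<^sub>v n then ?q * ?q ^ n else ?q ^ n)"
      using finW by (subst sum.insert) auto
    also have "(\<Sum>x\<in>W - {0\<^sub>v n}. if x = 0\<^sub>v n then ?q * ?q ^ n else ?q ^ n) = (\<Sum>x\<in>W - {0\<^sub>v n}. ?q ^ n)"
      by (intro sum.cong) auto
    also have "\<dots> = (card W - 1) * ?q ^ n" using W0 finW by simp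
    finally show ?thesis .
  qed
  have Wp_le: "card ?Wp \<le> ?q ^ n" by (metis (no_types, lifting) card_cv card_mono finite_cv mem_Collect_eq subsetI)
  have cW1: "card W \<ge> 1" using W0 finW by (metis One_nat_def Suc_leI card_gt_0_iff empty_iff)
  define N where "N = card ?Wp"
  define c where "c = card W"
  define Q where "Q = ?q ^ n"
  have NQ: "N \<le> Q" using Wp_le unfolding N_def Q_def .
  have c1: "c \<ge> 1" using cW1 unfolding c_def .
  have s1: "?q * card P = N * (?q * c) + (Q - N) * c" using sum1 unfolding N_def c_def Q_def .
  have s2: "?q * card P = ?q * Q + (c - 1) * Q" using sum2 unfolding c_def Q_def .
  have e1: "int ?q * int (card P) = int N * (int ?q * int c) + (int Q - int N) * int c"
  proof -
    have "int (?q * card P) = int (N * (?q * c) + (Q - N) * c)" using s1 by simp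
    then show ?thesis using NQ by (simp add: of_nat_diff)
  qed
  have e2: "int ?q * int (card P) = int ?q * int Q + (int c - 1) * int Q"
  proof -
    have "int (?q * card P) = int (?q * Q + (c - 1) * Q)" using s2 by simp
    then show ?thesis using c1 by (simp add: of_nat_diff)
  qed
  have "(int N * int c - int Q) * (int ?q - 1) = 0" using e1 e2 by (simp add: algebra_simps)
  moreover have "int ?q - 1 \<noteq> 0" using q2 by simp
  ultimately have "int N * int c = int Q" by simp
  then have "int (N * c) = int Q" by simp
  then have "N * c = Q" by (simp only: of_nat_eq_iff)
  then show ?thesis unfolding N_def c_def Q_def .
qed

lemma mat_vec_zero: "M \<in> carrier_mat m n \<Longrightarrow> M *\<^sub>v 0\<^sub>v n = (0\<^sub>v m :: 'a::field vec)"
  by (intro eq_vecI) auto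

lemma dual_card_M:
  fixes W :: "'a::{field,finite} vec set"
  assumes S: "subsp n W" and M: "M \<in> carrier_mat m n"
  shows "card {g\<in>carrier_vec m. \<forall>x\<in>W. g \<bullet> (M *\<^sub>v x) = 0} * card W \<ge> card (UNIV::'a set) ^ m"
proof -
  let ?I = "(\<lambda>x. M *\<^sub>v x) ` W"
  have WC: "W \<subseteq> carrier_vec n" and W0: "0\<^sub>v n \<in> W"
    and Wadd: "\<And>x y. x \<in> W \<Longrightarrow> y \<in> W \<Longrightarrow> x + y \<in> W"
    and Wsm: "\<And>a x. x \<in> W \<Longrightarrow> a \<cdot>\<^sub>v x \<in> W" using S by (auto simp: subsp_def)
  have SI: "subsp m ?I"
    unfolding subsp_def
  proof (intro conjI ballI allI)
    show "?I \<subseteq> carrier_vec m" using WC M by auto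
    show "0\<^sub>v m \<in> ?I" using W0 mat_vec_zero[OF M] by (metis image_eqI)
  next
    fix u v assume "u \<in> ?I" "v \<in> ?I"
    then obtain x y where xy: "x \<in> W" "y \<in> W" "u = M *\<^sub>v x" "v = M *\<^sub>v y" by auto
    have "M *\<^sub>v (x + y) = M *\<^sub>v x + M *\<^sub>v y" using xy WC by (intro mult_add_distrib_mat_vec[OF M]) auto
    then have "u + v = M *\<^sub>v (x + y)" using xy by simp
    then show "u + v \<in> ?I" using Wadd[OF xy(1,2)] by auto
  next
    fix a u assume "u \<in> ?I"
    then obtain x where x: "x \<in> W" "u = M *\<^sub>v x" by auto
    have "M *\<^sub>v (a \<cdot>\<^sub>v x) = a \<cdot>\<^sub>v (M *\<^sub>v x)" using x WC by (intro mult_mat_vec[OF M]) auto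
    then have "a \<cdot>\<^sub>v u = M *\<^sub>v (a \<cdot>\<^sub>v x)" using x by simp
    then show "a \<cdot>\<^sub>v u \<in> ?I" using Wsm[OF x(1)] by auto
  qed
  have eq: "{g\<in>carrier_vec m. \<forall>x\<in>W. g \<bullet> (M *\<^sub>v x) = 0} = {g\<in>carrier_vec m. \<forall>y\<in>?I. g \<bullet> y = 0}"
    by auto
  have "card ?I \<le> card W" using subsp_finite[OF S] by (rule card_image_le)
  then have "card {g\<in>carrier_vec m. \<forall>y\<in>?I. g \<bullet> y = 0} * card ?I \<le> card {g\<in>carrier_vec m. \<forall>y\<in>?I. g \<bullet> y = 0} * card W"
    by (rule mult_le_mono2)
  then show ?thesis unfolding eq dual_card[OF SI] .
qed

definition cl :: "'a::finite vec set \<Rightarrow> nat" where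
  "cl W = (THE c. card W = card (UNIV::'a set) ^ c)"

lemma cl_eq:
  fixes W :: "'a::{field,finite} vec set"
  assumes "card W = card (UNIV::'a set) ^ c"
  shows "cl W = c"
proof -
  have q: "1 < card (UNIV::'a set)" using card_field_ge2[where 'a='a] by simp
  show ?thesis unfolding cl_def
  proof (rule the_equality)
    show "card W = card (UNIV::'a set) ^ c" by fact
    fix d assume "card W = card (UNIV::'a set) ^ d"
    then show "d = c" using assms q by (metis power_inject_exp)
  qed
qed

definition pp :: "'a::field vec set \<Rightarrow> 'a mat \<Rightarrow> 'a vec \<Rightarrow> 'a vec set" where
  "pp W M g = {x\<in>W. g \<bullet> (M *\<^sub>v x) = 0}"

lemma pp_props:
  fixes W :: "'a::{field,finite} vec set"
  assumes S: "subsp n W" and M: "M \<in> carrier_mat m n" and g: "g \<in> carrier_vec m"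
  shows "subsp n (pp W M g)"
    and "(\<forall>x\<in>W. g \<bullet> (M *\<^sub>v x) = 0) \<Longrightarrow> pp W M g = W"
    and "\<not> (\<forall>x\<in>W. g \<bullet> (M *\<^sub>v x) = 0) \<Longrightarrow> card W = card (pp W M g) * card (UNIV::'a set)"
proof -
  have WC: "W \<subseteq> carrier_vec n" and W0: "0\<^sub>v n \<in> W"
    and Wadd: "\<And>x y. x \<in> W \<Longrightarrow> y \<in> W \<Longrightarrow> x + y \<in> W"
    and Wsm: "\<And>a x. x \<in> W \<Longrightarrow> a \<cdot>\<^sub>v x \<in> W" using S by (auto simp: subsp_def)
  have add: "g \<bullet> (M *\<^sub>v (x + y)) = g \<bullet> (M *\<^sub>v x) + g \<bullet> (M *\<^sub>v y)" if "x \<in> W" "y \<in> W" for x y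
  proof -
    have "M *\<^sub>v (x + y) = M *\<^sub>v x + M *\<^sub>v y" using that WC by (intro mult_add_distrib_mat_vec[OF M]) auto
    moreover have "M *\<^sub>v x \<in> carrier_vec m" "M *\<^sub>v y \<in> carrier_vec m" using that WC M by auto
    ultimately show ?thesis using g by (simp add: scalar_prod_add_distrib[of g m])
  qed
  have hom: "g \<bullet> (M *\<^sub>v (a \<cdot>\<^sub>v x)) = a * (g \<bullet> (M *\<^sub>v x))" if "x \<in> W" for a x
  proof -
    have "M *\<^sub>v (a \<cdot>\<^sub>v x) = a \<cdot>\<^sub>v (M *\<^sub>v x)" using that WC by (intro mult_mat_vec[OF M]) auto
    then show ?thesis using that WC M g by simp
  qed
  show "subsp n (pp W M g)"
    unfolding subsp_def pp_def
  proof (intro conjI ballI allI)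
    show "{x \<in> W. g \<bullet> (M *\<^sub>v x) = 0} \<subseteq> carrier_vec n" using WC by auto
    show "0\<^sub>v n \<in> {x \<in> W. g \<bullet> (M *\<^sub>v x) = 0}" using W0 mat_vec_zero[OF M] g by simp
  next
    fix x y assume "x \<in> {x \<in> W. g \<bullet> (M *\<^sub>v x) = 0}" "y \<in> {x \<in> W. g \<bullet> (M *\<^sub>v x) = 0}"
    then show "x + y \<in> {x \<in> W. g \<bullet> (M *\<^sub>v x) = 0}" using add Wadd by auto
  next
    fix a x assume "x \<in> {x \<in> W. g \<bullet> (M *\<^sub>v x) = 0}"
    then show "a \<cdot>\<^sub>v x \<in> {x \<in> W. g \<bullet> (M *\<^sub>v x) = 0}" using hom Wsm by auto
  qed
  show "(\<forall>x\<in>W. g \<bullet> (M *\<^sub>v x) = 0) \<Longrightarrow> pp W M g = W" unfolding pp_def by auto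
  assume "\<not> (\<forall>x\<in>W. g \<bullet> (M *\<^sub>v x) = 0)"
  then obtain w where w: "w \<in> W" "g \<bullet> (M *\<^sub>v w) \<noteq> 0" by auto
  show "card W = card (pp W M g) * card (UNIV::'a set)" unfolding pp_def
    by (rule lin_split[OF S, where \<phi>="\<lambda>x. g \<bullet> (M *\<^sub>v x)" and uu=w]) (use add hom w in auto)
qed

lemma pow_split:
  assumes "q ^ c = N * q" "(q::nat) \<ge> 2"
  shows "c \<ge> 1 \<and> N = q ^ (c - 1)"
proof (cases c)
  case 0
  then have "1 = N * q" using assms by simp
  then show ?thesis using assms(2) by (cases N) auto
next
  case (Suc d)
  then have "q ^ d * q = N * q" using assms by (simp add: mult.commute)
  then have "q ^ d = N" using assms(2) by simp
  then show ?thesis using Suc by simp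
qed

lemma os_core:
  fixes W :: "'a::{field,finite} vec set" and h :: "nat \<Rightarrow> real"
  assumes S: "subsp n W" and cW: "card W = card (UNIV::'a set) ^ c" and M: "M \<in> carrier_mat m n"
  shows "(\<Sum>g\<in>carrier_vec m. h (cl (pp W M g))) =
     real (card {g\<in>carrier_vec m. \<forall>x\<in>W. g \<bullet> (M *\<^sub>v x) = 0}) * h c
     + real (card (carrier_vec m - {g\<in>carrier_vec m. \<forall>x\<in>W. g \<bullet> (M *\<^sub>v x) = 0})) * h (c - 1)"
proof -
  let ?q = "card (UNIV::'a set)"
  let ?Np = "{g\<in>carrier_vec m. \<forall>x\<in>W. g \<bullet> (M *\<^sub>v x) = 0}"
  have "(\<Sum>g\<in>carrier_vec m. h (cl (pp W M g))) = (\<Sum>g\<in>carrier_vec m. if g \<in> ?Np then h c else h (c - 1))"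
  proof (rule sum.cong[OF refl])
    fix g :: "'a vec" assume g: "g \<in> carrier_vec m"
    show "h (cl (pp W M g)) = (if g \<in> ?Np then h c else h (c - 1))"
    proof (cases "g \<in> ?Np")
      case True
      then have "pp W M g = W" using pp_props(2)[OF S M g] by auto
      then show ?thesis using True cl_eq[OF cW] by simp
    next
      case False
      then have "card W = card (pp W M g) * ?q" using pp_props(3)[OF S M g] g by auto
      then have "card (pp W M g) = ?q ^ (c - 1)" using pow_split[of ?q c] cW card_field_ge2[where 'a='a] by metis
      then have "cl (pp W M g) = c - 1" by (rule cl_eq)
      moreover have "(if g \<in> ?Np then h c else h (c - 1)) = h (c - 1)" by (rule if_not_P[OF False])
      ultimately show ?thesis by simp
    qed
  qed
  also have "\<dots> = real (card ?Np) * h c + real (card (carrier_vec m - ?Np)) * h (c - 1)"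
    by (rule sum_if_split) auto
  finally show ?thesis .
qed

lemma os_ineq:
  fixes W :: "'a::{field,finite} vec set" and h :: "nat \<Rightarrow> real"
  assumes S: "subsp n W" and cW: "card W = card (UNIV::'a set) ^ c" and M: "M \<in> carrier_mat m n"
    and mono: "h c \<le> h (c - 1)"
  shows "real (card (UNIV::'a set) ^ c) * (\<Sum>g\<in>carrier_vec m. h (cl (pp W M g)))
     \<le> real (card (UNIV::'a set) ^ m) * (h c + (real (card (UNIV::'a set) ^ c) - 1) * h (c - 1))"
proof -
  let ?q = "card (UNIV::'a set)"
  let ?Np = "{g\<in>carrier_vec m. \<forall>x\<in>W. g \<bullet> (M *\<^sub>v x) = 0}"
  define N where "N = real (card ?Np)"
  define C where "C = real (?q ^ c)"
  define Q where "Q = real (?q ^ m)"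
  have sub: "?Np \<subseteq> carrier_vec m" by auto
  have "card ?Np \<le> card (carrier_vec m :: 'a vec set)" by (rule card_mono[OF finite_cv sub])
  then have le: "card ?Np \<le> ?q ^ m" by (simp only: card_cv)
  have cd: "real (card (carrier_vec m - ?Np)) = Q - N"
    unfolding N_def Q_def using sub le by (simp add: card_Diff_subset card_cv of_nat_diff)
  have NC: "N * C \<ge> Q"
  proof -
    have "?q ^ m \<le> card ?Np * card W" by (rule dual_card_M[OF S M])
    then have "real (?q ^ m) \<le> real (card ?Np * card W)" by (simp only: of_nat_le_iff)
    then show ?thesis unfolding N_def C_def Q_def cW by simp
  qed
  have sum: "(\<Sum>g\<in>carrier_vec m. h (cl (pp W M g))) = N * h c + (Q - N) * h (c - 1)"
    using os_core[OF S cW M, of h] cd unfolding N_def by simp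
  have key: "C * (N * h c + (Q - N) * h (c - 1)) - Q * (h c + (C - 1) * h (c - 1))
      = (N * C - Q) * (h c - h (c - 1))" by (simp add: algebra_simps)
  have "(N * C - Q) * (h c - h (c - 1)) \<le> 0"
    using NC mono by (intro mult_nonneg_nonpos) auto
  then show ?thesis unfolding sum C_def[symmetric] Q_def[symmetric] using key by linarith
qed

lemma os_eq:
  fixes W :: "'a::{field,finite} vec set" and h :: "nat \<Rightarrow> real"
  assumes S: "subsp n W" and cW: "card W = card (UNIV::'a set) ^ c"
  shows "real (card (UNIV::'a set) ^ c) * (\<Sum>g\<in>carrier_vec n. h (cl (pp W (1\<^sub>m n) g)))
     = real (card (UNIV::'a set) ^ n) * (h c + (real (card (UNIV::'a set) ^ c) - 1) * h (c - 1))"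
proof -
  let ?q = "card (UNIV::'a set)"
  let ?Np = "{g\<in>carrier_vec n. \<forall>x\<in>W. g \<bullet> (1\<^sub>m n *\<^sub>v x) = 0}"
  have WC: "W \<subseteq> carrier_vec n" using S by (simp add: subsp_def)
  define N where "N = real (card ?Np)"
  define C where "C = real (?q ^ c)"
  define Q where "Q = real (?q ^ n)"
  have sub: "?Np \<subseteq> carrier_vec n" by auto
  have "card ?Np \<le> card (carrier_vec n :: 'a vec set)" by (rule card_mono[OF finite_cv sub])
  then have le: "card ?Np \<le> ?q ^ n" by (simp only: card_cv)
  have cd: "real (card (carrier_vec n - ?Np)) = Q - N"
    unfolding N_def Q_def using sub le by (simp add: card_Diff_subset card_cv of_nat_diff)
  have NC: "N * C = Q"
  proof -
    have "\<And>x. x \<in> W \<Longrightarrow> 1\<^sub>m n *\<^sub>v x = x" using WC by auto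
    then have "?Np = {g\<in>carrier_vec n. \<forall>x\<in>W. g \<bullet> x = 0}" by simp
    then have "card ?Np * card W = ?q ^ n" using dual_card[OF S] by simp
    then have "real (card ?Np * card W) = real (?q ^ n)" by simp
    then show ?thesis unfolding N_def C_def Q_def cW by simp
  qed
  have sum: "(\<Sum>g\<in>carrier_vec n. h (cl (pp W (1\<^sub>m n) g))) = N * h c + (Q - N) * h (c - 1)"
    using os_core[OF S cW one_carrier_mat, of h] cd unfolding N_def by simp
  have key: "C * (N * h c + (Q - N) * h (c - 1)) - Q * (h c + (C - 1) * h (c - 1))
      = (N * C - Q) * (h c - h (c - 1))" by (simp add: algebra_simps)
  then show ?thesis unfolding sum C_def[symmetric] Q_def[symmetric] using NC by simp
qed

lemma Pfull_0[simp]: "Pfull q a 0 = 1" by (simp add: Pfull_def)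

lemma Pfull_Suc: "Pfull q a (Suc b) = Pfull q a b * (1 - real q powi (int b - int a))"
  by (simp add: Pfull_def)

lemma Pfull_vanish: "a < b \<Longrightarrow> Pfull q a b = 0"
  unfolding Pfull_def by (rule prod_zero) (auto intro!: bexI[of _ a])

lemma Pfull_factor_bounds:
  assumes "q \<ge> 1" "i < a"
  shows "0 \<le> 1 - real q powi (int i - int a)" "1 - real q powi (int i - int a) \<le> 1"
proof -
  have "real q powi (int i - int a) \<le> real q powi 0"
    using assms by (intro power_int_increasing) auto
  then show "0 \<le> 1 - real q powi (int i - int a)" by simp
  have "0 \<le> real q powi (int i - int a)" using assms by simp
  then show "1 - real q powi (int i - int a) \<le> 1" by simp
qed

lemma Pfull_nonneg: "q \<ge> 1 \<Longrightarrow> 0 \<le> Pfull q a b"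
proof (cases "b \<le> a")
  case True
  assume q: "q \<ge> 1"
  show ?thesis unfolding Pfull_def
    by (rule prod_nonneg) (use Pfull_factor_bounds(1)[OF q] True in auto)
next
  case False
  then show ?thesis by (simp add: Pfull_vanish)
qed

lemma Pfull_anti: assumes q: "q \<ge> 1" shows "Pfull q a b \<le> Pfull q a (b - 1)"
proof (cases b)
  case 0 then show ?thesis by simp
next
  case (Suc c)
  show ?thesis
  proof (cases "c < a")
    case True
    have "Pfull q a b = Pfull q a c * (1 - real q powi (int c - int a))" using Suc by (simp add: Pfull_Suc)
    also have "\<dots> \<le> Pfull q a c * 1"
      by (rule mult_left_mono) (use Pfull_factor_bounds[OF q True] Pfull_nonneg[OF q] in auto)
    finally show ?thesis using Suc by simp
  next
    case False
    then have "Pfull q a b = 0" using Suc by (intro Pfull_vanish) auto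
    then show ?thesis using Pfull_nonneg[OF q] by simp
  qed
qed

lemma Pfull_zero_arg: "Pfull q 0 c = (if c = 0 then 1 else 0)"
  by (cases c) (auto intro: Pfull_vanish)

lemma Pfull_rec:
  assumes q: "q \<ge> 2"
  shows "real (q ^ c) * Pfull q (Suc a) c = Pfull q a c + (real (q ^ c) - 1) * Pfull q a (c - 1)"
proof (cases c)
  case 0 then show ?thesis by simp
next
  case (Suc d)
  define x where "x = real q"
  have x0: "x \<noteq> 0" using q unfolding x_def by simp
  have e1: "Pfull q (Suc a) (Suc d) = (1 - x powi (- 1 - int a)) * Pfull q a d"
    unfolding Pfull_def x_def[symmetric] by (simp add: prod.lessThan_Suc_shift del: prod.lessThan_Suc)
  have e2: "Pfull q a (Suc d) = Pfull q a d * (1 - x powi (int d - int a))"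
    unfolding x_def by (rule Pfull_Suc)
  have e3: "x ^ Suc d * x powi (- 1 - int a) = x powi (int d - int a)"
  proof -
    have "x ^ Suc d * x powi (- 1 - int a) = x powi (int (Suc d)) * x powi (- 1 - int a)" by (simp only: power_int_of_nat)
    also have "\<dots> = x powi (int (Suc d) + (- 1 - int a))" by (rule power_int_add[symmetric]) (simp add: x0)
    also have "int (Suc d) + (- 1 - int a) = int d - int a" by simp
    finally show ?thesis .
  qed
  show ?thesis unfolding Suc e1 e2 x_def[symmetric] of_nat_power
    using e3 by (simp add: algebra_simps)
qed

lemma powi_neg_nat: "(x::real) \<noteq> 0 \<Longrightarrow> x powi (- int n) = 1 / x ^ n"
  by (simp add: power_int_minus divide_inverse)

lemma powi_diff_nat: "(x::real) \<noteq> 0 \<Longrightarrow> x powi (int m - int n) = x ^ m / x ^ n"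
  by (simp add: power_int_diff)

lemma Prank_rec0:
  assumes q: "q \<ge> 2"
  shows "Prank q 0 (Suc a) b = real q powi (- int b) * Prank q 0 a b"
proof -
  define x where "x = real q"
  have x0: "x \<noteq> 0" using q unfolding x_def by simp
  have "Prank q 0 (Suc a) b = x powi (- (int (Suc a * b)))" unfolding Prank_def x_def by (simp add: algebra_simps)
  also have "\<dots> = 1 / x ^ (Suc a * b)" using x0 by (rule powi_neg_nat)
  also have "\<dots> = (1 / x ^ b) * (1 / x ^ (a * b))" by (simp add: power_add)
  also have "\<dots> = x powi (- int b) * x powi (- int (a * b))" by (simp only: powi_neg_nat[OF x0])
  also have "x powi (- int (a * b)) = Prank q 0 a b" unfolding Prank_def x_def by simp
  finally show ?thesis unfolding x_def .
qed

lemma Prank_rec: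
  assumes q: "q \<ge> 2" and sb: "s < b"
  shows "Prank q (Suc s) (Suc a) b = real q powi (int (Suc s) - int b) * Prank q (Suc s) a b
          + (1 - real q powi (int s - int b)) * Prank q s a b"
proof -
  define x where "x = real q"
  have x0: "x \<noteq> 0" and x1: "x > 1" using q unfolding x_def by auto
  define t where "t = b - Suc s"
  have bt: "b = Suc s + t" using sb unfolding t_def by simp
  define Num where "Num = (\<Prod>i<s. x ^ (b - i) - 1)"
  define Den where "Den = (\<Prod>i<s. x ^ (s - i) - (1::real))"
  define A where "A = (\<Prod>i<s. 1 - x powi (int i - int a))"
  have G1: "(\<Prod>i<Suc s. (x ^ (b - i) - 1) / (x ^ (Suc s - i) - 1)) = Num * (x ^ (b - s) - 1) / ((x ^ Suc s - 1) * Den)"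
  proof -
    have "(\<Prod>i<Suc s. (x ^ (b - i) - 1) / (x ^ (Suc s - i) - 1))
        = (\<Prod>i<Suc s. x ^ (b - i) - 1) / (\<Prod>i<Suc s. x ^ (Suc s - i) - 1)" by (rule prod_dividef)
    also have "(\<Prod>i<Suc s. x ^ (b - i) - 1) = Num * (x ^ (b - s) - 1)" unfolding Num_def by simp
    also have "(\<Prod>i<Suc s. x ^ (Suc s - i) - (1::real)) = (x ^ Suc s - 1) * Den"
      unfolding Den_def by (simp only: prod.lessThan_Suc_shift) simp
    finally show ?thesis .
  qed
  have G0: "(\<Prod>i<s. (x ^ (b - i) - 1) / (x ^ (s - i) - 1)) = Num / Den"
    unfolding Num_def Den_def by (rule prod_dividef)
  have A1: "(\<Prod>i<Suc s. 1 - x powi (int i - int (Suc a))) = (1 - x powi (- 1 - int a)) * A"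
    unfolding A_def by (simp add: prod.lessThan_Suc_shift del: prod.lessThan_Suc)
  have A2: "(\<Prod>i<Suc s. 1 - x powi (int i - int a)) = A * (1 - x powi (int s - int a))"
    unfolding A_def by simp
  have L: "Prank q (Suc s) (Suc a) b = x powi (- (int (Suc a) * (int b - int (Suc s))))
      * (Num * (x ^ (b - s) - 1) / ((x ^ Suc s - 1) * Den)) * ((1 - x powi (- 1 - int a)) * A)"
    unfolding Prank_def x_def[symmetric] G1 A1 ..
  have R1: "Prank q (Suc s) a b = x powi (- (int a * (int b - int (Suc s))))
      * (Num * (x ^ (b - s) - 1) / ((x ^ Suc s - 1) * Den)) * (A * (1 - x powi (int s - int a)))"
    unfolding Prank_def x_def[symmetric] G1 A2 ..
  have R2: "Prank q s a b = x powi (- (int a * (int b - int s))) * (Num / Den) * A"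
    unfolding Prank_def x_def[symmetric] G0 A_def ..
  define X where "X = x ^ a"
  define T where "T = x ^ t"
  define S where "S = x ^ s"
  define Y where "Y = X ^ t"
  have X0: "X > 0" "T > 0" "S > 0" "Y > 0" using x1 unfolding X_def T_def S_def Y_def by auto
  have S1: "S * x - 1 \<noteq> 0"
  proof -
    have "S \<ge> 1" unfolding S_def using x1 by simp
    then have "S * x \<ge> 1 * x" using x1 by (intro mult_right_mono) auto
    then have "S * x > 1" using x1 by linarith
    then show ?thesis by simp
  qed
  have p1: "x powi (- (int (Suc a) * (int b - int (Suc s)))) = 1 / (Y * T)"
  proof -
    have "- (int (Suc a) * (int b - int (Suc s))) = - int (Suc a * t)" using bt by (simp add: algebra_simps)
    then have "x powi (- (int (Suc a) * (int b - int (Suc s)))) = 1 / x ^ (Suc a * t)" using powi_neg_nat[OF x0] by metis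
    also have "x ^ (Suc a * t) = Y * T"
    proof -
      have "x ^ (Suc a * t) = x ^ t * x ^ (a * t)" by (simp add: power_add)
      also have "x ^ (a * t) = (x ^ a) ^ t" by (rule power_mult)
      finally show ?thesis unfolding Y_def T_def X_def by simp
    qed
    finally show ?thesis .
  qed
  have p2: "x powi (- (int a * (int b - int (Suc s)))) = 1 / Y"
  proof -
    have "- (int a * (int b - int (Suc s))) = - int (a * t)" using bt by (simp add: algebra_simps)
    then have "x powi (- (int a * (int b - int (Suc s)))) = 1 / x ^ (a * t)" using powi_neg_nat[OF x0] by metis
    also have "x ^ (a * t) = Y" unfolding Y_def X_def by (simp add: power_mult)
    finally show ?thesis .
  qed
  have p3: "x powi (- (int a * (int b - int s))) = 1 / (Y * X)"
  proof -
    have "- (int a * (int b - int s)) = - int (a * Suc t)" using bt by (simp add: algebra_simps)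
    then have "x powi (- (int a * (int b - int s))) = 1 / x ^ (a * Suc t)" using powi_neg_nat[OF x0] by metis
    also have "x ^ (a * Suc t) = Y * X"
    proof -
      have "x ^ (a * Suc t) = (x ^ a) ^ Suc t" by (rule power_mult)
      then show ?thesis unfolding Y_def X_def by (simp add: mult.commute)
    qed
    finally show ?thesis .
  qed
  have p4: "x powi (- 1 - int a) = 1 / (X * x)"
  proof -
    have "- 1 - int a = - int (Suc a)" by simp
    then have "x powi (- 1 - int a) = 1 / x ^ Suc a" using powi_neg_nat[OF x0] by metis
    then show ?thesis unfolding X_def by (simp add: mult.commute)
  qed
  have p5: "x powi (int s - int a) = S / X" unfolding S_def X_def using x0 by (rule powi_diff_nat)
  have p6: "x powi (int (Suc s) - int b) = S * x / (S * x * T)"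
  proof -
    have "x powi (int (Suc s) - int b) = x ^ Suc s / x ^ b" using x0 by (rule powi_diff_nat)
    also have "x ^ b = S * x * T" unfolding S_def T_def bt by (simp add: power_add)
    finally show ?thesis unfolding S_def by simp
  qed
  have p7: "x powi (int s - int b) = S / (S * x * T)"
  proof -
    have "x powi (int s - int b) = x ^ s / x ^ b" using x0 by (rule powi_diff_nat)
    also have "x ^ b = S * x * T" unfolding S_def T_def bt by (simp add: power_add)
    finally show ?thesis unfolding S_def by simp
  qed
  have p8: "x ^ (b - s) = T * x" unfolding T_def bt by simp
  have p9: "x ^ Suc s = S * x" unfolding S_def by simp
  have Den0: "Den \<noteq> 0"
  proof -
    have "\<And>i. i < s \<Longrightarrow> x ^ (s - i) - 1 \<noteq> 0"
    proof -
      fix i assume "i < s"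
      then have "x ^ (s - i) > 1" using x1 by (intro one_less_power) auto
      then show "x ^ (s - i) - 1 \<noteq> 0" by simp
    qed
    then show ?thesis unfolding Den_def by (simp add: prod_zero_iff)
  qed
  show ?thesis
    unfolding x_def[symmetric] L R1 R2 p1 p2 p3 p4 p5 p6 p7 p8 p9
    using X0 S1 x0 Den0 by (simp add: field_simps)
qed

definition annT :: "'a::field vec set \<Rightarrow> 'a mat \<Rightarrow> nat set \<Rightarrow> (nat \<Rightarrow> 'a vec) \<Rightarrow> 'a vec set" where
  "annT W M T \<rho> = {x\<in>W. \<forall>t\<in>T. \<rho> t \<bullet> (M *\<^sub>v x) = 0}"

lemma annT_empty[simp]: "annT W M {} \<rho> = W" by (simp add: annT_def)

lemma annT_insert: "annT W M (insert i T) \<rho> = pp (annT W M T \<rho>) M (\<rho> i)"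
  by (auto simp: annT_def pp_def)

lemma annT_upd_in:
  assumes "i \<in> T"
  shows "annT W M T (g(i := v)) = annT (pp W M v) M (T - {i}) g"
  using assms by (auto simp: annT_def pp_def)

lemma annT_upd_notin:
  assumes "i \<notin> T"
  shows "annT W M T (g(i := v)) = annT W M T g"
  using assms unfolding annT_def by (intro Collect_cong conj_cong refl ball_cong) auto

lemma pp_pow:
  fixes W :: "'a::{field,finite} vec set"
  assumes S: "subsp n W" and cW: "card W = card (UNIV::'a set) ^ c"
    and M: "M \<in> carrier_mat m n" and g: "g \<in> carrier_vec m"
  shows "subsp n (pp W M g) \<and> card (pp W M g) = card (UNIV::'a set) ^ cl (pp W M g)"
proof (cases "\<forall>x\<in>W. g \<bullet> (M *\<^sub>v x) = 0")
  case True
  then show ?thesis using pp_props[OF S M g] cW cl_eq[OF cW] by simp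
next
  case False
  then have "card W = card (pp W M g) * card (UNIV::'a set)" using pp_props(3)[OF S M g] by simp
  then have "card (pp W M g) = card (UNIV::'a set) ^ (c - 1)"
    using pow_split[of "card (UNIV::'a set)" c] cW card_field_ge2[where 'a='a] by metis
  then show ?thesis using pp_props(1)[OF S M g] cl_eq by metis
qed

lemma sum_PiE_insert:
  assumes "i \<notin> I" "finite I"
  shows "(\<Sum>\<rho>\<in>PiE (insert i I) B. f \<rho>) = (\<Sum>v\<in>B i. \<Sum>g\<in>PiE I B. f (g(i := v)))"
proof -
  have "(\<Sum>\<rho>\<in>PiE (insert i I) B. f \<rho>) = (\<Sum>\<rho>\<in>(\<lambda>(y, g). g(i := y)) ` (B i \<times> PiE I B). f \<rho>)"
    by (simp only: PiE_insert_eq)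
  also have "\<dots> = (\<Sum>p\<in>B i \<times> PiE I B. f ((\<lambda>(y, g). g(i := y)) p))"
    by (rule sum.reindex[OF inj_combinator[OF assms(1)], unfolded comp_def])
  also have "\<dots> = (\<Sum>v\<in>B i. \<Sum>g\<in>PiE I B. f (g(i := v)))"
    by (simp add: sum.cartesian_product split_def)
  finally show ?thesis .
qed

lemma PiE_upd_mem: "g \<in> PiE I B \<Longrightarrow> t \<in> I \<Longrightarrow> i \<notin> I \<Longrightarrow> (g(i := v)) t = g t"
  by auto

lemma chainG:
  fixes W :: "'a::{field,finite} vec set"
  assumes fin: "finite I" and TI: "T \<subseteq> I" and S: "subsp n W" and cW: "card W = card (UNIV::'a set) ^ c"
    and M: "M \<in> carrier_mat m n"
  shows "(\<Sum>\<rho>\<in>PiE I (\<lambda>_. carrier_vec m). Pfull (card (UNIV::'a set)) k (cl (annT W M T \<rho>)))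
     \<le> real (card (UNIV::'a set) ^ (m * card I)) * Pfull (card (UNIV::'a set)) (k + card T) c"
  using fin TI S cW
proof (induction I arbitrary: T W c rule: finite_induct)
  case empty
  then have "T = {}" by auto
  then show ?case using empty cl_eq[OF empty.prems(3)] by simp
next
  case (insert i I)
  let ?q = "card (UNIV::'a set)"
  let ?V = "carrier_vec m :: 'a vec set"
  have q2: "?q \<ge> 2" by (rule card_field_ge2)
  have split: "(\<Sum>\<rho>\<in>PiE (insert i I) (\<lambda>_. ?V). Pfull ?q k (cl (annT W M T \<rho>)))
      = (\<Sum>v\<in>?V. \<Sum>g\<in>PiE I (\<lambda>_. ?V). Pfull ?q k (cl (annT W M T (g(i := v)))))"
    by (rule sum_PiE_insert[OF insert.hyps(2,1)])
  show ?case
  proof (cases "i \<in> T")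
    case True
    let ?T' = "T - {i}"
    have T'I: "?T' \<subseteq> I" using insert.prems(1) insert.hyps(2) by auto
    have cT: "card T = Suc (card ?T')" using True T'I insert.hyps(1) by (metis card_Suc_Diff1 finite_subset insert.prems(1) finite_insert)
    define h where "h = (\<lambda>c'. Pfull ?q (k + card ?T') c')"
    have inner: "(\<Sum>g\<in>PiE I (\<lambda>_. ?V). Pfull ?q k (cl (annT W M T (g(i := v)))))
        \<le> real (?q ^ (m * card I)) * h (cl (pp W M v))" if v: "v \<in> ?V" for v
    proof -
      have pw: "subsp n (pp W M v) \<and> card (pp W M v) = ?q ^ cl (pp W M v)"
        by (rule pp_pow[OF insert.prems(2,3) M v])
      have "(\<Sum>g\<in>PiE I (\<lambda>_. ?V). Pfull ?q k (cl (annT W M T (g(i := v)))))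
          = (\<Sum>g\<in>PiE I (\<lambda>_. ?V). Pfull ?q k (cl (annT (pp W M v) M ?T' g)))"
        by (simp only: annT_upd_in[OF True])
      also have "\<dots> \<le> real (?q ^ (m * card I)) * Pfull ?q (k + card ?T') (cl (pp W M v))"
        using insert.IH[OF T'I] pw by blast
      finally show ?thesis unfolding h_def .
    qed
    have "(\<Sum>v\<in>?V. \<Sum>g\<in>PiE I (\<lambda>_. ?V). Pfull ?q k (cl (annT W M T (g(i := v)))))
        \<le> (\<Sum>v\<in>?V. real (?q ^ (m * card I)) * h (cl (pp W M v)))"
      by (rule sum_mono) (rule inner)
    also have "\<dots> = real (?q ^ (m * card I)) * (\<Sum>v\<in>?V. h (cl (pp W M v)))"
      by (simp add: sum_distrib_left)
    also have "(\<Sum>v\<in>?V. h (cl (pp W M v))) \<le> real (?q ^ m) * Pfull ?q (k + card T) c"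
    proof -
      have hm: "h c \<le> h (c - 1)" unfolding h_def using q2 by (intro Pfull_anti) auto
      have A: "real (?q ^ c) * (\<Sum>v\<in>?V. h (cl (pp W M v))) \<le> real (?q ^ m) * (h c + (real (?q ^ c) - 1) * h (c - 1))"
        by (rule os_ineq[OF insert.prems(2,3) M hm])
      have B: "real (?q ^ c) * Pfull ?q (k + card T) c = h c + (real (?q ^ c) - 1) * h (c - 1)"
        unfolding h_def cT using Pfull_rec[OF q2, of c "k + card ?T'"] by simp
      have pos: "real (?q ^ c) > 0" using q2 by simp
      from A have "real (?q ^ c) * (\<Sum>v\<in>?V. h (cl (pp W M v))) \<le> real (?q ^ m) * (real (?q ^ c) * Pfull ?q (k + card T) c)"
        by (simp only: B[symmetric])
      then have "real (?q ^ c) * (\<Sum>v\<in>?V. h (cl (pp W M v))) \<le> real (?q ^ c) * (real (?q ^ m) * Pfull ?q (k + card T) c)"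
        by (simp only: mult.left_commute)
      then show ?thesis using pos by (simp only: mult_le_cancel_left_pos)
    qed
    then have "real (?q ^ (m * card I)) * (\<Sum>v\<in>?V. h (cl (pp W M v))) \<le> real (?q ^ (m * card I)) * (real (?q ^ m) * Pfull ?q (k + card T) c)"
      by (rule mult_left_mono) simp
    also have "\<dots> = real (?q ^ (m * card (insert i I))) * Pfull ?q (k + card T) c"
      using insert.hyps by (simp add: power_add algebra_simps)
    finally show ?thesis using split by simp
  next
    case False
    have TI': "T \<subseteq> I" using False insert.prems(1) by auto
    have "(\<Sum>v\<in>?V. \<Sum>g\<in>PiE I (\<lambda>_. ?V). Pfull ?q k (cl (annT W M T (g(i := v)))))
        = (\<Sum>v\<in>?V. \<Sum>g\<in>PiE I (\<lambda>_. ?V). Pfull ?q k (cl (annT W M T g)))"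
      by (simp only: annT_upd_notin[OF False])
    also have "\<dots> = real (?q ^ m) * (\<Sum>g\<in>PiE I (\<lambda>_. ?V). Pfull ?q k (cl (annT W M T g)))"
      by (simp add: card_cv)
    also have "\<dots> \<le> real (?q ^ m) * (real (?q ^ (m * card I)) * Pfull ?q (k + card T) c)"
      by (rule mult_left_mono) (use insert.IH[OF TI' insert.prems(2,3)] in auto)
    also have "\<dots> = real (?q ^ (m * card (insert i I))) * Pfull ?q (k + card T) c"
      using insert.hyps by (simp add: power_add algebra_simps)
    finally show ?thesis using split by simp
  qed
qed

lemma annT_inv:
  fixes W :: "'a::{field,finite} vec set"
  assumes fin: "finite T" and S: "subsp n W" and cW: "card W = card (UNIV::'a set) ^ c"
    and M: "M \<in> carrier_mat m n" and rho: "\<And>t. t \<in> T \<Longrightarrow> \<rho> t \<in> carrier_vec m"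
  shows "subsp n (annT W M T \<rho>) \<and> card (annT W M T \<rho>) = card (UNIV::'a set) ^ cl (annT W M T \<rho>)"
  using fin rho
proof (induction T rule: finite_induct)
  case empty
  then show ?case using S cW cl_eq[OF cW] by simp
next
  case (insert t T)
  then have IH: "subsp n (annT W M T \<rho>) \<and> card (annT W M T \<rho>) = card (UNIV::'a set) ^ cl (annT W M T \<rho>)"
    by auto
  have "\<rho> t \<in> carrier_vec m" using insert.prems by auto
  then show ?case unfolding annT_insert by (rule pp_pow[OF conjunct1[OF IH] conjunct2[OF IH] M])
qed

lemma cl_le:
  fixes W :: "'a::{field,finite} vec set"
  assumes S: "subsp n W" and cW: "card W = card (UNIV::'a set) ^ c"
  shows "c \<le> n"
proof -
  have "W \<subseteq> carrier_vec n" using S by (simp add: subsp_def)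
  then have "card W \<le> card (carrier_vec n :: 'a vec set)" by (intro card_mono) auto
  then have le: "card (UNIV::'a set) ^ c \<le> card (UNIV::'a set) ^ n" using cW by (simp add: card_cv)
  have q1: "1 < card (UNIV::'a set)" using card_field_ge2[where 'a='a] by simp
  show ?thesis using power_le_imp_le_exp[OF q1 le] .
qed

lemma chainC:
  fixes W :: "'a::{field,finite} vec set"
  assumes fin: "finite I" and TI: "T \<subseteq> I" and S: "subsp n W" and cW: "card W = card (UNIV::'a set) ^ c"
  shows "(\<Sum>\<rho>\<in>PiE I (\<lambda>_. carrier_vec n). Pfull (card (UNIV::'a set)) k (cl (annT W (1\<^sub>m n) T \<rho>)))
     = real (card (UNIV::'a set) ^ (n * card I)) * Pfull (card (UNIV::'a set)) (k + card T) c"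
  using fin TI S cW
proof (induction I arbitrary: T W c rule: finite_induct)
  case empty
  then have "T = {}" by auto
  then show ?case using empty cl_eq[OF empty.prems(3)] by simp
next
  case (insert i I)
  let ?q = "card (UNIV::'a set)"
  let ?V = "carrier_vec n :: 'a vec set"
  let ?M = "1\<^sub>m n :: 'a mat"
  have M: "?M \<in> carrier_mat n n" by simp
  have q2: "?q \<ge> 2" by (rule card_field_ge2)
  have split: "(\<Sum>\<rho>\<in>PiE (insert i I) (\<lambda>_. ?V). Pfull ?q k (cl (annT W ?M T \<rho>)))
      = (\<Sum>v\<in>?V. \<Sum>g\<in>PiE I (\<lambda>_. ?V). Pfull ?q k (cl (annT W ?M T (g(i := v)))))"
    by (rule sum_PiE_insert[OF insert.hyps(2,1)])
  show ?case
  proof (cases "i \<in> T")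
    case True
    let ?T' = "T - {i}"
    have T'I: "?T' \<subseteq> I" using insert.prems(1) insert.hyps(2) by auto
    have cT: "card T = Suc (card ?T')" using True T'I insert.hyps(1) by (metis card_Suc_Diff1 finite_subset insert.prems(1) finite_insert)
    define h where "h = (\<lambda>c'. Pfull ?q (k + card ?T') c')"
    have inner: "(\<Sum>g\<in>PiE I (\<lambda>_. ?V). Pfull ?q k (cl (annT W ?M T (g(i := v)))))
        = real (?q ^ (n * card I)) * h (cl (pp W ?M v))" if v: "v \<in> ?V" for v
    proof -
      have pw: "subsp n (pp W ?M v) \<and> card (pp W ?M v) = ?q ^ cl (pp W ?M v)"
        by (rule pp_pow[OF insert.prems(2,3) M v])
      have "(\<Sum>g\<in>PiE I (\<lambda>_. ?V). Pfull ?q k (cl (annT W ?M T (g(i := v)))))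
          = (\<Sum>g\<in>PiE I (\<lambda>_. ?V). Pfull ?q k (cl (annT (pp W ?M v) ?M ?T' g)))"
        by (simp only: annT_upd_in[OF True])
      also have "\<dots> = real (?q ^ (n * card I)) * Pfull ?q (k + card ?T') (cl (pp W ?M v))"
        using insert.IH[OF T'I] pw by blast
      finally show ?thesis unfolding h_def .
    qed
    have "(\<Sum>v\<in>?V. \<Sum>g\<in>PiE I (\<lambda>_. ?V). Pfull ?q k (cl (annT W ?M T (g(i := v)))))
        = (\<Sum>v\<in>?V. real (?q ^ (n * card I)) * h (cl (pp W ?M v)))"
      by (rule sum.cong[OF refl]) (rule inner)
    also have "\<dots> = real (?q ^ (n * card I)) * (\<Sum>v\<in>?V. h (cl (pp W ?M v)))"
      by (simp add: sum_distrib_left)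
    also have "(\<Sum>v\<in>?V. h (cl (pp W ?M v))) = real (?q ^ n) * Pfull ?q (k + card T) c"
    proof -
      have A: "real (?q ^ c) * (\<Sum>v\<in>?V. h (cl (pp W ?M v))) = real (?q ^ n) * (h c + (real (?q ^ c) - 1) * h (c - 1))"
        by (rule os_eq[OF insert.prems(2,3)])
      have B: "real (?q ^ c) * Pfull ?q (k + card T) c = h c + (real (?q ^ c) - 1) * h (c - 1)"
        unfolding h_def cT using Pfull_rec[OF q2, of c "k + card ?T'"] by simp
      have pos: "real (?q ^ c) > 0" using q2 by simp
      from A have "real (?q ^ c) * (\<Sum>v\<in>?V. h (cl (pp W ?M v))) = real (?q ^ n) * (real (?q ^ c) * Pfull ?q (k + card T) c)"
        by (simp only: B[symmetric])
      then have "real (?q ^ c) * (\<Sum>v\<in>?V. h (cl (pp W ?M v))) = real (?q ^ c) * (real (?q ^ n) * Pfull ?q (k + card T) c)"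
        by (simp only: mult.left_commute)
      then show ?thesis using pos by simp
    qed
    also have "real (?q ^ (n * card I)) * (real (?q ^ n) * Pfull ?q (k + card T) c) = real (?q ^ (n * card (insert i I))) * Pfull ?q (k + card T) c"
      using insert.hyps by (simp add: power_add algebra_simps)
    finally show ?thesis unfolding split .
  next
    case False
    have TI': "T \<subseteq> I" using False insert.prems(1) by auto
    have "(\<Sum>v\<in>?V. \<Sum>g\<in>PiE I (\<lambda>_. ?V). Pfull ?q k (cl (annT W ?M T (g(i := v)))))
        = (\<Sum>v\<in>?V. \<Sum>g\<in>PiE I (\<lambda>_. ?V). Pfull ?q k (cl (annT W ?M T g)))"
      by (simp only: annT_upd_notin[OF False])
    also have "\<dots> = real (?q ^ n) * (\<Sum>g\<in>PiE I (\<lambda>_. ?V). Pfull ?q k (cl (annT W ?M T g)))"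
      by (simp add: card_cv)
    also have "\<dots> = real (?q ^ n) * (real (?q ^ (n * card I)) * Pfull ?q (k + card T) c)"
      using insert.IH[OF TI' insert.prems(2,3)] by simp
    also have "\<dots> = real (?q ^ (n * card (insert i I))) * Pfull ?q (k + card T) c"
      using insert.hyps by (simp add: power_add algebra_simps)
    finally show ?thesis unfolding split .
  qed
qed

lemma Prank_zero_a: "Prank q r 0 b = (if r = 0 then 1 else 0)"
proof (cases r)
  case 0 then show ?thesis by (simp add: Prank_def)
next
  case (Suc s)
  have "(\<Prod>i<r. 1 - real q powi (int i - int 0)) = 0"
    by (rule prod_zero) (use Suc in \<open>auto intro!: bexI[of _ 0]\<close>)
  then show ?thesis using Suc by (simp add: Prank_def)
qed

lemma dist_point:
  fixes x :: real and c c' n :: nat and S :: real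
  assumes x0: "x > 0"
    and os: "x ^ c' * S = x ^ n * ((if c' = c then 1 else 0) + (x ^ c' - 1) * (if c' - 1 = c then 1 else 0))"
  shows "S = (if c' = c then x ^ n / x ^ c else 0) + (if c' = Suc c then x ^ n * (x ^ Suc c - 1) / x ^ Suc c else 0)"
proof -
  define E where "E = (if c' = c then 1 else 0) + (x ^ c' - 1) * (if c' - 1 = c then 1 else (0::real))"
  have xc: "x ^ c' > 0" using x0 by simp
  have "S = (x ^ c' * S) / x ^ c'" using xc x0 by simp
  also have "\<dots> = x ^ n * E / x ^ c'" using os unfolding E_def by simp
  finally have S: "S = x ^ n * E / x ^ c'" .
  show ?thesis
  proof (cases "c' = c")
    case True
    have "E = 1" unfolding E_def using True by (cases c) auto
    then show ?thesis using S True by simp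
  next
    case False
    show ?thesis
    proof (cases "c' = Suc c")
      case True
      have "E = x ^ Suc c - 1" unfolding E_def using True by simp
      then show ?thesis using S True by simp
    next
      case F2: False
      have "c' - 1 \<noteq> c" using False F2 by (cases c') auto
      then have "E = 0" unfolding E_def using False by simp
      then show ?thesis using S False F2 by simp
    qed
  qed
qed

lemma sum_if_const: "(\<Sum>g\<in>A. if P g then a else 0) = (a::real) * (\<Sum>g\<in>A. if P g then 1 else 0)"
  by (subst sum_distrib_left) (rule sum.cong, auto)

lemma dist:
  fixes I :: "nat set"
  assumes fin: "finite I"
  shows "\<forall>c\<le>n. (\<Sum>\<rho>\<in>PiE I (\<lambda>_. carrier_vec n :: 'a::{field,finite} vec set).
            (if cl (annT (carrier_vec n) (1\<^sub>m n) I \<rho>) = c then 1 else 0 :: real))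
         = real (card (UNIV::'a set) ^ (n * card I)) * Prank (card (UNIV::'a set)) (n - c) (card I) n"
  using fin
proof (induction I rule: finite_induct)
  case empty
  let ?q = "card (UNIV::'a set)"
  have "cl (carrier_vec n :: 'a vec set) = n" by (rule cl_eq) (simp add: card_cv)
  then show ?case by (auto simp: Prank_zero_a)
next
  case (insert i I)
  let ?q = "card (UNIV::'a set)"
  let ?V = "carrier_vec n :: 'a vec set"
  let ?M = "1\<^sub>m n :: 'a mat"
  define x where "x = real ?q"
  have q2: "?q \<ge> 2" by (rule card_field_ge2)
  have x0: "x > 0" "x \<noteq> 0" using q2 unfolding x_def by auto
  define N where "N = (\<lambda>d. (\<Sum>g\<in>PiE I (\<lambda>_. ?V). (if cl (annT ?V ?M I g) = d then 1 else 0 :: real)))"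
  have inv: "subsp n (annT ?V ?M I g) \<and> card (annT ?V ?M I g) = ?q ^ cl (annT ?V ?M I g)"
    if g: "g \<in> PiE I (\<lambda>_. ?V)" for g
    by (rule annT_inv[OF insert.hyps(1) subsp_carrier]) (use g in \<open>auto simp: card_cv\<close>)
  show ?case
  proof (intro allI impI)
    fix c assume cn: "c \<le> n"
    have "(\<Sum>\<rho>\<in>PiE (insert i I) (\<lambda>_. ?V). (if cl (annT ?V ?M (insert i I) \<rho>) = c then 1 else 0 :: real))
        = (\<Sum>v\<in>?V. \<Sum>g\<in>PiE I (\<lambda>_. ?V). (if cl (annT ?V ?M (insert i I) (g(i := v))) = c then 1 else 0 :: real))"
      by (rule sum_PiE_insert[OF insert.hyps(2,1)])
    also have "\<dots> = (\<Sum>v\<in>?V. \<Sum>g\<in>PiE I (\<lambda>_. ?V). (if cl (pp (annT ?V ?M I g) ?M v) = c then 1 else 0 :: real))"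
      by (simp only: annT_insert annT_upd_notin[OF insert.hyps(2)] fun_upd_same)
    also have "\<dots> = (\<Sum>g\<in>PiE I (\<lambda>_. ?V). \<Sum>v\<in>?V. (if cl (pp (annT ?V ?M I g) ?M v) = c then 1 else 0 :: real))"
      by (rule sum.swap)
    also have "\<dots> = (\<Sum>g\<in>PiE I (\<lambda>_. ?V). (if cl (annT ?V ?M I g) = c then x ^ n / x ^ c else 0)
          + (if cl (annT ?V ?M I g) = Suc c then x ^ n * (x ^ Suc c - 1) / x ^ Suc c else 0))"
    proof (rule sum.cong[OF refl])
      fix g assume g: "g \<in> PiE I (\<lambda>_. ?V)"
      let ?W = "annT ?V ?M I g"
      have os: "real (?q ^ cl ?W) * (\<Sum>v\<in>?V. (\<lambda>d. if d = c then 1 else 0 :: real) (cl (pp ?W ?M v)))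
        = real (?q ^ n) * ((\<lambda>d. if d = c then 1 else 0 :: real) (cl ?W) + (real (?q ^ cl ?W) - 1) * (\<lambda>d. if d = c then 1 else 0 :: real) (cl ?W - 1))"
        by (rule os_eq) (use inv[OF g] in auto)
      show "(\<Sum>v\<in>?V. (if cl (pp ?W ?M v) = c then 1 else 0 :: real))
         = (if cl ?W = c then x ^ n / x ^ c else 0) + (if cl ?W = Suc c then x ^ n * (x ^ Suc c - 1) / x ^ Suc c else 0)"
        by (rule dist_point[OF x0(1)]) (use os in \<open>simp add: x_def\<close>)
    qed
    also have "\<dots> = x ^ n / x ^ c * N c + x ^ n * (x ^ Suc c - 1) / x ^ Suc c * N (Suc c)"
      unfolding N_def by (simp only: sum.distrib sum_if_const[where a="x ^ n / x ^ c"] sum_if_const[where a="x ^ n * (x ^ Suc c - 1) / x ^ Suc c"])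
    also have "\<dots> = real (?q ^ (n * card (insert i I))) * Prank ?q (n - c) (card (insert i I)) n"
    proof -
      have Nc: "N c = x ^ (n * card I) * Prank ?q (n - c) (card I) n"
        using insert.IH cn unfolding N_def x_def by simp
      have ci: "card (insert i I) = Suc (card I)" using insert.hyps by simp
      show ?thesis
      proof (cases "c < n")
        case True
        have NSc: "N (Suc c) = x ^ (n * card I) * Prank ?q (n - Suc c) (card I) n"
          using insert.IH True unfolding N_def x_def by simp
        define s where "s = n - Suc c"
        have s1: "Suc s = n - c" "s < n" using True unfolding s_def by auto
        have rec: "Prank ?q (Suc s) (Suc (card I)) n = x powi (int (Suc s) - int n) * Prank ?q (Suc s) (card I) n
            + (1 - x powi (int s - int n)) * Prank ?q s (card I) n"
          unfolding x_def by (rule Prank_rec[OF q2 s1(2)])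
        have e1: "x powi (int (Suc s) - int n) = 1 / x ^ c"
        proof -
          have "int (Suc s) - int n = - int c" using s1 cn by simp
          then show ?thesis using powi_neg_nat[OF x0(2)] by metis
        qed
        have e2: "x powi (int s - int n) = 1 / x ^ Suc c"
        proof -
          have "int s - int n = - int (Suc c)" using True unfolding s_def by simp
          then show ?thesis using powi_neg_nat[OF x0(2)] by metis
        qed
        have "real (?q ^ (n * card (insert i I))) = x ^ n * x ^ (n * card I)"
          unfolding ci x_def by (simp add: power_add)
        then show ?thesis unfolding Nc NSc ci s1(1)[symmetric] rec e1 e2 s_def[symmetric]
          using x0 by (simp add: field_simps)
      next
        case False
        then have cn': "c = n" using cn by simp
        have NSc: "N (Suc c) = 0"
        proof -
          have "\<And>g. g \<in> PiE I (\<lambda>_. ?V) \<Longrightarrow> cl (annT ?V ?M I g) \<noteq> Suc c"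
          proof -
            fix g assume g: "g \<in> PiE I (\<lambda>_. ?V)"
            have "cl (annT ?V ?M I g) \<le> n" using inv[OF g] by (intro cl_le[of n "annT ?V ?M I g"]) auto
            then show "cl (annT ?V ?M I g) \<noteq> Suc c" using cn' by simp
          qed
          then show ?thesis unfolding N_def by simp
        qed
        have rec: "Prank ?q 0 (Suc (card I)) n = x powi (- int n) * Prank ?q 0 (card I) n"
          unfolding x_def by (rule Prank_rec0[OF q2])
        have pw: "real (?q ^ (n * card (insert i I))) = x ^ n * x ^ (n * card I)"
          unfolding ci x_def by (simp add: power_add)
        have nc0: "n - c = 0" using cn' by simp
        show ?thesis unfolding pw Nc NSc ci nc0 rec powi_neg_nat[OF x0(2)] unfolding cn'
          using x0 by (simp add: field_simps x_def power_add)
      qed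
    qed
    finally show "(\<Sum>\<rho>\<in>PiE (insert i I) (\<lambda>_. ?V). (if cl (annT ?V ?M (insert i I) \<rho>) = c then 1 else 0 :: real))
        = real (?q ^ (n * card (insert i I))) * Prank ?q (n - c) (card (insert i I)) n" .
  qed
qed

lemma (in vec_space) nd_low_rank:
  assumes "A \<in> carrier_mat n nc"
    and "\<not> distinct (cols A)"
  shows "rank A < nc"
proof -
  obtain S where "maximal S (\<lambda>T. T \<subseteq> set (cols A) \<and> lin_indpt T)"
    using maximal_exists[of "(\<lambda>T. T \<subseteq> set (cols A) \<and> lin_indpt T)" "card (set (cols A))" "{}"]
    by (meson List.finite_set card_mono empty_iff empty_subsetI finite_lin_indpt2 rev_finite_subset)
  then have "card S \<le> card (set (cols A))" by (simp add: card_mono maximal_def)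
  moreover have "card (set (cols A)) < nc"
  proof -
    have "card (set (cols A)) \<le> length (cols A)" by (rule card_length)
    moreover have "card (set (cols A)) \<noteq> length (cols A)" using assms(2) card_distinct by blast
    moreover have "length (cols A) = nc" using assms(1) by simp
    ultimately show ?thesis by simp
  qed
  ultimately have "card S < nc" by simp
  then show ?thesis
    using rank_card_indpt[OF assms(1) \<open>maximal S (\<lambda>T. T \<subseteq> set (cols A) \<and> lin_indpt T)\<close>]
    by simp
qed

lemma (in vec_space) full_rank_ker:
  assumes A: "A \<in> carrier_mat n nc" and r: "rank A = nc" and v: "v \<in> carrier_vec nc"
    and z: "A *\<^sub>v v = 0\<^sub>v n"
  shows "v = 0\<^sub>v nc"
proof (rule ccontr)
  assume nz: "v \<noteq> 0\<^sub>v nc"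
  have d: "distinct (cols A)" using nd_low_rank[OF A] r by auto
  have "lin_indpt (set (cols A))" by (rule full_rank_lin_indpt[OF A r d])
  moreover have "lin_dep (set (cols A))" by (rule lin_depI[OF A v nz z d])
  ultimately show False by simp
qed

lemma rank_ker:
  fixes A :: "'a::field mat"
  assumes A: "A \<in> carrier_mat n nc" and r: "vec_space.rank n A = nc" and v: "v \<in> carrier_vec nc"
    and z: "A *\<^sub>v v = 0\<^sub>v n"
  shows "v = 0\<^sub>v nc"
proof -
  interpret vs: vec_space "TYPE('a)" n .
  show ?thesis by (rule vs.full_rank_ker[OF A r v z])
qed

lemma pick_lt:
  assumes k: "k < card {i. i < n \<and> i \<in> I}"
  shows "pick I k \<in> I \<and> pick I k < n"
proof -
  have sub: "{i. i < n \<and> i \<in> I} \<subseteq> I" by auto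
  have ci: "k < card I \<or> infinite I"
  proof (cases "finite I")
    case True
    then have "card {i. i < n \<and> i \<in> I} \<le> card I" using sub by (intro card_mono) auto
    then show ?thesis using k by simp
  qed simp
  have inI: "pick I k \<in> I" using pick_in_set[OF ci] .
  have "pick I k < n"
  proof (rule ccontr)
    assume "\<not> pick I k < n"
    then have "n \<le> pick I k" by simp
    then have "card {a\<in>I. a < n} \<le> k" using card_le_pick[OF ci] by blast
    then show False using k set_le_in[of n I] by simp
  qed
  then show ?thesis using inI by simp
qed

lemma submatrix_mult_zero:
  fixes A :: "'a::field mat"
  assumes x: "x \<in> carrier_vec (dim_col A)"
    and h: "\<And>i. i \<in> I \<Longrightarrow> i < dim_row A \<Longrightarrow> row A i \<bullet> x = 0"
  shows "submatrix A I UNIV *\<^sub>v x = 0\<^sub>v (dim_row (submatrix A I UNIV))"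
proof (rule eq_vecI)
  fix k assume "k < dim_vec (0\<^sub>v (dim_row (submatrix A I UNIV)) :: 'a vec)"
  then have k: "k < card {i. i < dim_row A \<and> i \<in> I}" by (simp add: dim_submatrix)
  have "(submatrix A I UNIV *\<^sub>v x) $ k = row (submatrix A I UNIV) k \<bullet> x"
    using k by (simp add: dim_submatrix)
  also have "\<dots> = row A (pick I k) \<bullet> x" using row_submatrix_UNIV[OF k] by simp
  also have "\<dots> = 0" using pick_lt[OF k] h by auto
  finally show "(submatrix A I UNIV *\<^sub>v x) $ k = 0\<^sub>v (dim_row (submatrix A I UNIV)) $ k"
    using k by (simp add: dim_submatrix)
qed simp

lemma dim_col_sub: "dim_col (submatrix A I UNIV) = dim_col A"
proof -
  have "{j. j < dim_col A \<and> j \<in> (UNIV::nat set)} = {..<dim_col A}" by auto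
  then show ?thesis by (simp only: dim_submatrix(2) card_lessThan)
qed

lemma submatrix_carrier_UNIV: "submatrix A I UNIV \<in> carrier_mat (card {i. i < dim_row A \<and> i \<in> I}) (dim_col A)"
  by (intro carrier_matI) (simp_all only: dim_submatrix(1) dim_col_sub)

lemma card_lt_in: "I \<subseteq> {..<n} \<Longrightarrow> card {i. i < n \<and> i \<in> I} = card I"
  by (rule arg_cong[where f=card]) auto

lemma append_zero_vec: "0\<^sub>v a @\<^sub>v 0\<^sub>v b = (0\<^sub>v (a + b) :: 'a::zero vec)"
  by (intro eq_vecI) (auto simp: index_append_vec)

lemma foldr_blocks:
  fixes B :: "nat \<Rightarrow> 'a::field mat"
  assumes "\<And>j. j \<in> set js \<Longrightarrow> B j \<in> carrier_mat (r j) K \<and> B j *\<^sub>v x = 0\<^sub>v (r j)"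
    and x: "x \<in> carrier_vec K"
  shows "\<exists>nr. foldr (\<lambda>j M. B j @\<^sub>r M) js (0\<^sub>m 0 K) \<in> carrier_mat nr K
            \<and> foldr (\<lambda>j M. B j @\<^sub>r M) js (0\<^sub>m 0 K) *\<^sub>v x = 0\<^sub>v nr"
  using assms(1)
proof (induction js)
  case Nil
  show ?case by (intro exI[of _ 0]) (auto intro!: eq_vecI)
next
  case (Cons j js)
  then obtain nr where IH: "foldr (\<lambda>j M. B j @\<^sub>r M) js (0\<^sub>m 0 K) \<in> carrier_mat nr K"
     "foldr (\<lambda>j M. B j @\<^sub>r M) js (0\<^sub>m 0 K) *\<^sub>v x = 0\<^sub>v nr" by auto
  have Bj: "B j \<in> carrier_mat (r j) K" "B j *\<^sub>v x = 0\<^sub>v (r j)" using Cons.prems by auto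
  have "foldr (\<lambda>j M. B j @\<^sub>r M) (j # js) (0\<^sub>m 0 K) = B j @\<^sub>r foldr (\<lambda>j M. B j @\<^sub>r M) js (0\<^sub>m 0 K)" by simp
  moreover have "B j @\<^sub>r foldr (\<lambda>j M. B j @\<^sub>r M) js (0\<^sub>m 0 K) \<in> carrier_mat (r j + nr) K"
    using Bj IH by auto
  moreover have "(B j @\<^sub>r foldr (\<lambda>j M. B j @\<^sub>r M) js (0\<^sub>m 0 K)) *\<^sub>v x = 0\<^sub>v (r j + nr)"
    using mat_mult_append[OF Bj(1) IH(1) x] Bj(2) IH(2) append_zero_vec by metis
  ultimately show ?case by metis
qed

lemma dest_ker:
  fixes C :: "'a::field mat" and G :: "nat \<Rightarrow> 'a mat"
  assumes C: "C \<in> carrier_mat NS K"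
    and G: "\<And>j. j < L \<Longrightarrow> G j \<in> carrier_mat NR (card (RS j))"
    and RS: "\<And>j. j < L \<Longrightarrow> RS j \<subseteq> {..<NS}"
    and x: "x \<in> carrier_vec K"
    and h1: "\<And>i. i \<in> DS \<Longrightarrow> i < NS \<Longrightarrow> row C i \<bullet> x = 0"
    and h2: "\<And>j t. j < L \<Longrightarrow> t \<in> RD j \<Longrightarrow> t < NR \<Longrightarrow> row (G j) t \<bullet> (relay_in C (RS j) *\<^sub>v x) = 0"
  shows "dest_mat K L DS RS RD C G \<in> carrier_mat (dim_row (dest_mat K L DS RS RD C G)) K
     \<and> dest_mat K L DS RS RD C G *\<^sub>v x = 0\<^sub>v (dim_row (dest_mat K L DS RS RD C G))"
proof -
  let ?S0 = "submatrix C DS UNIV"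
  let ?r0 = "card {i. i < dim_row C \<and> i \<in> DS}"
  have dC: "dim_row C = NS" "dim_col C = K" using C by auto
  have S0c: "?S0 \<in> carrier_mat ?r0 K" using submatrix_carrier_UNIV[of C DS] dC by simp
  have S0z: "?S0 *\<^sub>v x = 0\<^sub>v ?r0"
  proof -
    have "?S0 *\<^sub>v x = 0\<^sub>v (dim_row ?S0)" by (rule submatrix_mult_zero) (use x dC h1 in auto)
    then show ?thesis using S0c by simp
  qed
  define B where "B = (\<lambda>j. submatrix (G j * relay_in C (RS j)) (RD j) UNIV)"
  define r where "r = (\<lambda>j. card {i. i < NR \<and> i \<in> RD j})"
  have blocks: "B j \<in> carrier_mat (r j) K \<and> B j *\<^sub>v x = 0\<^sub>v (r j)" if j: "j \<in> set [0..<L]" for j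
  proof -
    have jL: "j < L" using j by simp
    let ?Cj = "relay_in C (RS j)"
    have Cj: "?Cj \<in> carrier_mat (card (RS j)) K"
      using submatrix_carrier_UNIV[of C "RS j"] dC card_lt_in[OF RS[OF jL]] unfolding relay_in_def by simp
    have P: "G j * ?Cj \<in> carrier_mat NR K" using G[OF jL] Cj by auto
    have dG: "dim_row (G j) = NR" using G[OF jL] by simp
    have dCj: "dim_col ?Cj = K" using Cj by simp
    have Bc: "B j \<in> carrier_mat (r j) K"
      using submatrix_carrier_UNIV[of "G j * ?Cj" "RD j"] dG dCj unfolding B_def r_def by simp
    have "B j *\<^sub>v x = 0\<^sub>v (dim_row (B j))" unfolding B_def
    proof (rule submatrix_mult_zero)
      show "x \<in> carrier_vec (dim_col (G j * ?Cj))" using x dCj by simp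
      fix t assume t: "t \<in> RD j" "t < dim_row (G j * ?Cj)"
      then have tN: "t < NR" using dG by simp
      have "row (G j * ?Cj) t \<bullet> x = ((G j * ?Cj) *\<^sub>v x) $ t"
        by (rule index_mult_mat_vec[symmetric]) (use tN dG in simp)
      also have "(G j * ?Cj) *\<^sub>v x = G j *\<^sub>v (?Cj *\<^sub>v x)" using G[OF jL] Cj x by (rule assoc_mult_mat_vec)
      also have "(G j *\<^sub>v (?Cj *\<^sub>v x)) $ t = row (G j) t \<bullet> (?Cj *\<^sub>v x)" using tN G[OF jL] by simp
      also have "\<dots> = 0" using h2[OF jL t(1) tN] .
      finally show "row (G j * ?Cj) t \<bullet> x = 0" .
    qed
    then show ?thesis using Bc by simp
  qed
  obtain nr where F: "foldr (\<lambda>j M. B j @\<^sub>r M) [0..<L] (0\<^sub>m 0 K) \<in> carrier_mat nr K"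
    "foldr (\<lambda>j M. B j @\<^sub>r M) [0..<L] (0\<^sub>m 0 K) *\<^sub>v x = 0\<^sub>v nr"
    using foldr_blocks[of "[0..<L]" B r K x, OF blocks x] by blast
  have D: "dest_mat K L DS RS RD C G = ?S0 @\<^sub>r foldr (\<lambda>j M. B j @\<^sub>r M) [0..<L] (0\<^sub>m 0 K)"
    unfolding dest_mat_def B_def ..
  have Dc: "dest_mat K L DS RS RD C G \<in> carrier_mat (?r0 + nr) K" unfolding D using S0c F(1) by auto
  have Dz: "dest_mat K L DS RS RD C G *\<^sub>v x = 0\<^sub>v (?r0 + nr)"
    unfolding D using mat_mult_append[OF S0c F(1) x] S0z F(2) append_zero_vec by metis
  show ?thesis using Dc Dz by simp
qed

lemma not_X:
  fixes C :: "'a::field mat" and G :: "nat \<Rightarrow> 'a mat"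
  assumes C: "C \<in> carrier_mat NS K"
    and G: "\<And>j. j < L \<Longrightarrow> G j \<in> carrier_mat NR (card (RS j))"
    and RS: "\<And>j. j < L \<Longrightarrow> RS j \<subseteq> {..<NS}"
    and x: "x \<in> carrier_vec K" and nz: "x \<noteq> 0\<^sub>v K"
    and h1: "\<And>i. i \<in> DS \<Longrightarrow> i < NS \<Longrightarrow> row C i \<bullet> x = 0"
    and h2: "\<And>j t. j < L \<Longrightarrow> t \<in> RD j \<Longrightarrow> t < NR \<Longrightarrow> row (G j) t \<bullet> (relay_in C (RS j) *\<^sub>v x) = 0"
  shows "\<not> (let CD = dest_mat K L DS RS RD C G in vec_space.rank (dim_row CD) CD = K)"
proof
  assume "let CD = dest_mat K L DS RS RD C G in vec_space.rank (dim_row CD) CD = K"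
  then have r: "vec_space.rank (dim_row (dest_mat K L DS RS RD C G)) (dest_mat K L DS RS RD C G) = K" by (simp add: Let_def)
  have k: "dest_mat K L DS RS RD C G \<in> carrier_mat (dim_row (dest_mat K L DS RS RD C G)) K
     \<and> dest_mat K L DS RS RD C G *\<^sub>v x = 0\<^sub>v (dim_row (dest_mat K L DS RS RD C G))"
    by (rule dest_ker[OF C G RS x h1 h2])
  have "x = 0\<^sub>v K" using rank_ker[OF conjunct1[OF k] r x conjunct2[OF k]] .
  then show False using nz by simp
qed

definition rowsf :: "nat \<Rightarrow> 'a mat \<Rightarrow> nat \<Rightarrow> 'a vec" where
  "rowsf nr A = (\<lambda>t\<in>{..<nr}. row A t)"

lemma rowsf_bij: "bij_betw (rowsf nr) (carrier_mat nr nc :: 'a mat set) (PiE {..<nr} (\<lambda>_. carrier_vec nc))"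
proof -
  define f' where "f' = (\<lambda>\<rho>::nat \<Rightarrow> 'a vec. mat nr nc (\<lambda>(i, j). \<rho> i $ j))"
  have h1: "\<forall>A\<in>carrier_mat nr nc. f' (rowsf nr A) = A"
  proof
    fix A :: "'a mat" assume A: "A \<in> carrier_mat nr nc"
    show "f' (rowsf nr A) = A" unfolding f'_def rowsf_def
      by (rule eq_matI) (use A in auto)
  qed
  have h2: "\<forall>\<rho>\<in>PiE {..<nr} (\<lambda>_. carrier_vec nc). rowsf nr (f' \<rho>) = \<rho>"
  proof (intro ballI ext)
    fix \<rho> :: "nat \<Rightarrow> 'a vec" and t assume r: "\<rho> \<in> PiE {..<nr} (\<lambda>_. carrier_vec nc)"
    show "rowsf nr (f' \<rho>) t = \<rho> t"
    proof (cases "t < nr")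
      case True
      then have "\<rho> t \<in> carrier_vec nc" using r by auto
      then show ?thesis using True unfolding rowsf_def f'_def by (auto intro!: eq_vecI)
    next
      case False
      then have nt: "t \<notin> {..<nr}" by simp
      have "\<rho> t = undefined" by (rule PiE_arb[OF r nt])
      then show ?thesis unfolding rowsf_def using nt by (simp only: restrict_apply' if_False) simp
    qed
  qed
  have h3: "rowsf nr ` carrier_mat nr nc \<subseteq> PiE {..<nr} (\<lambda>_. carrier_vec nc)"
    unfolding rowsf_def by (intro image_subsetI) (simp only: restrict_PiE_iff, auto)
  have h4: "f' ` PiE {..<nr} (\<lambda>_. carrier_vec nc) \<subseteq> carrier_mat nr nc"
    unfolding f'_def by (intro image_subsetI mat_carrier)
  show ?thesis using bij_betw_byWitness[OF h1 h2 h3 h4] .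
qed

lemma card_cm: "card (carrier_mat nr nc :: 'a::finite mat set) = card (UNIV::'a set) ^ (nc * nr)"
proof -
  have "card (carrier_mat nr nc :: 'a mat set) = card (PiE {..<nr} (\<lambda>_. carrier_vec nc :: 'a vec set))"
    using rowsf_bij by (rule bij_betw_same_card)
  also have "\<dots> = (card (UNIV::'a set) ^ nc) ^ nr" by (simp add: card_PiE card_cv)
  finally show ?thesis by (simp add: power_mult)
qed

lemma finite_cm: "finite (carrier_mat nr nc :: 'a::finite mat set)"
proof -
  have "finite (PiE {..<nr} (\<lambda>_. carrier_vec nc :: 'a vec set))" by (intro finite_PiE) auto
  then show ?thesis using bij_betw_finite[OF rowsf_bij] by blast
qed

lemma relayR1:
  fixes W :: "'a::{field,finite} vec set"
  assumes S: "subsp n W" and cW: "card W = card (UNIV::'a set) ^ c"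
    and M: "M \<in> carrier_mat m n" and T: "T \<subseteq> {..<nr}"
  shows "(\<Sum>g\<in>carrier_mat nr m. Pfull (card (UNIV::'a set)) k (cl (annT W M T (rowsf nr g))))
     \<le> real (card (UNIV::'a set) ^ (m * nr)) * Pfull (card (UNIV::'a set)) (k + card T) c"
proof -
  have "(\<Sum>g\<in>carrier_mat nr m. Pfull (card (UNIV::'a set)) k (cl (annT W M T (rowsf nr g))))
      = (\<Sum>\<rho>\<in>PiE {..<nr} (\<lambda>_. carrier_vec m). Pfull (card (UNIV::'a set)) k (cl (annT W M T \<rho>)))"
    by (rule sum.reindex_bij_betw[OF rowsf_bij])
  also have "\<dots> \<le> real (card (UNIV::'a set) ^ (m * card {..<nr})) * Pfull (card (UNIV::'a set)) (k + card T) c"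
    by (rule chainG[OF _ T S cW M]) simp
  finally show ?thesis by simp
qed

definition annL :: "'a::field vec set \<Rightarrow> (nat \<Rightarrow> 'a mat) \<Rightarrow> (nat \<Rightarrow> nat set) \<Rightarrow> nat set \<Rightarrow> (nat \<Rightarrow> 'a mat) \<Rightarrow> 'a vec set" where
  "annL W Mf RD J G = {x\<in>W. \<forall>j\<in>J. \<forall>t\<in>RD j. row (G j) t \<bullet> (Mf j *\<^sub>v x) = 0}"

lemma annL_empty[simp]: "annL W Mf RD {} G = W" by (simp add: annL_def)

lemma annL_insert:
  assumes "j \<notin> J" "RD j \<subseteq> {..<nr}"
  shows "annL W Mf RD (insert j J) (G(j := g)) = annL (annT W (Mf j) (RD j) (rowsf nr g)) Mf RD J G"
proof -
  have r: "\<And>t. t \<in> RD j \<Longrightarrow> rowsf nr g t = row g t" using assms(2) unfolding rowsf_def by auto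
  show ?thesis using assms(1) r unfolding annL_def annT_def by auto
qed

lemma chainL:
  fixes W :: "'a::{field,finite} vec set"
  assumes fin: "finite J" and MJ: "\<And>j. j \<in> J \<Longrightarrow> Mf j \<in> carrier_mat (mm j) n \<and> RD j \<subseteq> {..<nr}"
    and S: "subsp n W" and cW: "card W = card (UNIV::'a set) ^ c"
  shows "(\<Sum>G\<in>PiE J (\<lambda>j. carrier_mat nr (mm j)). Pfull (card (UNIV::'a set)) k (cl (annL W Mf RD J G)))
     \<le> real (\<Prod>j\<in>J. card (UNIV::'a set) ^ (mm j * nr)) * Pfull (card (UNIV::'a set)) (k + (\<Sum>j\<in>J. card (RD j))) c"
  using fin MJ S cW
proof (induction J arbitrary: W c rule: finite_induct)
  case empty
  then show ?case using cl_eq[OF empty.prems(3)] by simp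
next
  case (insert j J)
  let ?q = "card (UNIV::'a set)"
  let ?GS = "\<lambda>J. PiE J (\<lambda>j. carrier_mat nr (mm j) :: 'a mat set)"
  have Mj: "Mf j \<in> carrier_mat (mm j) n" and RDj: "RD j \<subseteq> {..<nr}" using insert.prems(1) by auto
  have finRD: "finite (RD j)" using RDj finite_subset by blast
  define \<Pi>J where "\<Pi>J = real (\<Prod>j\<in>J. ?q ^ (mm j * nr))"
  define \<Sigma>J where "\<Sigma>J = (\<Sum>j\<in>J. card (RD j))"
  have "(\<Sum>G\<in>?GS (insert j J). Pfull ?q k (cl (annL W Mf RD (insert j J) G)))
      = (\<Sum>g\<in>carrier_mat nr (mm j). \<Sum>G\<in>?GS J. Pfull ?q k (cl (annL W Mf RD (insert j J) (G(j := g)))))"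
    by (rule sum_PiE_insert[OF insert.hyps(2,1)])
  also have "\<dots> = (\<Sum>g\<in>carrier_mat nr (mm j). \<Sum>G\<in>?GS J. Pfull ?q k (cl (annL (annT W (Mf j) (RD j) (rowsf nr g)) Mf RD J G)))"
    by (simp only: annL_insert[where RD=RD and j=j, OF insert.hyps(2) RDj])
  also have "\<dots> \<le> (\<Sum>g\<in>carrier_mat nr (mm j). \<Pi>J * Pfull ?q (k + \<Sigma>J) (cl (annT W (Mf j) (RD j) (rowsf nr g))))"
  proof (rule sum_mono)
    fix g :: "'a mat" assume g: "g \<in> carrier_mat nr (mm j)"
    have inv: "subsp n (annT W (Mf j) (RD j) (rowsf nr g)) \<and> card (annT W (Mf j) (RD j) (rowsf nr g)) = ?q ^ cl (annT W (Mf j) (RD j) (rowsf nr g))"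
    proof (rule annT_inv[OF finRD insert.prems(2,3) Mj])
      fix t assume "t \<in> RD j"
      then have "t < nr" using RDj by auto
      then show "rowsf nr g t \<in> carrier_vec (mm j)" using g unfolding rowsf_def by auto
    qed
    show "(\<Sum>G\<in>?GS J. Pfull ?q k (cl (annL (annT W (Mf j) (RD j) (rowsf nr g)) Mf RD J G)))
        \<le> \<Pi>J * Pfull ?q (k + \<Sigma>J) (cl (annT W (Mf j) (RD j) (rowsf nr g)))"
      unfolding \<Pi>J_def \<Sigma>J_def using insert.IH[of "annT W (Mf j) (RD j) (rowsf nr g)" "cl (annT W (Mf j) (RD j) (rowsf nr g))"] insert.prems(1) inv
      by auto
  qed
  also have "\<dots> = \<Pi>J * (\<Sum>g\<in>carrier_mat nr (mm j). Pfull ?q (k + \<Sigma>J) (cl (annT W (Mf j) (RD j) (rowsf nr g))))"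
    by (simp add: sum_distrib_left)
  also have "\<dots> \<le> \<Pi>J * (real (?q ^ (mm j * nr)) * Pfull ?q (k + \<Sigma>J + card (RD j)) c)"
  proof (rule mult_left_mono)
    show "(\<Sum>g\<in>carrier_mat nr (mm j). Pfull ?q (k + \<Sigma>J) (cl (annT W (Mf j) (RD j) (rowsf nr g))))
        \<le> real (?q ^ (mm j * nr)) * Pfull ?q (k + \<Sigma>J + card (RD j)) c"
      by (rule relayR1[OF insert.prems(2,3) Mj RDj])
    show "0 \<le> \<Pi>J" unfolding \<Pi>J_def by (rule of_nat_0_le_iff)
  qed
  also have "\<dots> = real (\<Prod>j\<in>insert j J. ?q ^ (mm j * nr)) * Pfull ?q (k + (\<Sum>j\<in>insert j J. card (RD j))) c"
    unfolding \<Pi>J_def \<Sigma>J_def using insert.hyps by (simp add: algebra_simps)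
  finally show ?case .
qed

lemma sum_group:
  fixes F :: "nat \<Rightarrow> real"
  assumes fin: "finite A" and le: "\<And>x. x \<in> A \<Longrightarrow> f x \<le> K"
  shows "(\<Sum>x\<in>A. F (f x)) = (\<Sum>c\<in>{..K}. F c * (\<Sum>x\<in>A. if f x = c then 1 else 0))"
proof -
  have "(\<Sum>c\<in>{..K}. F c * (\<Sum>x\<in>A. if f x = c then 1 else 0)) = (\<Sum>c\<in>{..K}. \<Sum>x\<in>A. if f x = c then F c else 0)"
    by (simp add: sum_distrib_left if_distrib cong: if_cong)
  also have "\<dots> = (\<Sum>x\<in>A. \<Sum>c\<in>{..K}. if f x = c then F c else 0)" by (rule sum.swap)
  also have "\<dots> = (\<Sum>x\<in>A. F (f x))"
  proof (rule sum.cong[OF refl])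
    fix x assume "x \<in> A"
    then have "f x \<in> {..K}" using le by auto
    then show "(\<Sum>c\<in>{..K}. if f x = c then F c else 0) = F (f x)"
      by (simp add: sum.delta)
  qed
  finally show ?thesis by simp
qed

lemma sum_PiE_split:
  fixes F :: "'a \<Rightarrow> 'c set" and f :: "('a \<Rightarrow> 'c) \<Rightarrow> 'b::comm_monoid_add"
  assumes disj: "A \<inter> B = {}" and finA: "finite A" and finB: "finite B"
  shows "(\<Sum>\<rho>\<in>PiE (A \<union> B) F. f \<rho>) = (\<Sum>\<rho>1\<in>PiE A F. \<Sum>\<rho>2\<in>PiE B F. f (\<lambda>i. if i \<in> A then \<rho>1 i else \<rho>2 i))"
proof -
  define mg where "mg = (\<lambda>(\<rho>1::'a \<Rightarrow> 'c, \<rho>2::'a \<Rightarrow> 'c). (\<lambda>i. if i \<in> A then \<rho>1 i else \<rho>2 i))"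
  have bij: "bij_betw mg (PiE A F \<times> PiE B F) (PiE (A \<union> B) F)"
  proof (rule bij_betw_byWitness[where f'="\<lambda>\<rho>. (restrict \<rho> A, restrict \<rho> B)"])
    show "\<forall>p\<in>PiE A F \<times> PiE B F. (restrict (mg p) A, restrict (mg p) B) = p"
    proof
      fix p assume p: "p \<in> PiE A F \<times> PiE B F"
      obtain r1 r2 where pr: "p = (r1, r2)" by (cases p)
      have r1: "r1 \<in> PiE A F" and r2: "r2 \<in> PiE B F" using p pr by auto
      have "restrict (mg p) A = r1"
      proof (rule ext)
        fix i show "restrict (mg p) A i = r1 i" unfolding pr mg_def by (cases "i \<in> A") (simp_all add: PiE_arb[OF r1])
      qed
      moreover have "restrict (mg p) B = r2"
      proof (rule ext)
        fix i show "restrict (mg p) B i = r2 i" using disj unfolding pr mg_def by (cases "i \<in> B") (auto simp add: PiE_arb[OF r2])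
      qed
      ultimately show "(restrict (mg p) A, restrict (mg p) B) = p" using pr by simp
    qed
    show "\<forall>\<rho>\<in>PiE (A \<union> B) F. mg (restrict \<rho> A, restrict \<rho> B) = \<rho>"
    proof
      fix \<rho> assume r: "\<rho> \<in> PiE (A \<union> B) F"
      show "mg (restrict \<rho> A, restrict \<rho> B) = \<rho>"
      proof (rule ext)
        fix i show "mg (restrict \<rho> A, restrict \<rho> B) i = \<rho> i"
          unfolding mg_def by (cases "i \<in> A"; cases "i \<in> B") (simp_all add: PiE_arb[OF r])
      qed
    qed
    show "mg ` (PiE A F \<times> PiE B F) \<subseteq> PiE (A \<union> B) F"
      unfolding mg_def by (auto simp: PiE_iff extensional_def)
    show "(\<lambda>\<rho>. (restrict \<rho> A, restrict \<rho> B)) ` PiE (A \<union> B) F \<subseteq> PiE A F \<times> PiE B F"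
      by (auto simp: PiE_iff)
  qed
  have "(\<Sum>\<rho>\<in>PiE (A \<union> B) F. f \<rho>) = (\<Sum>p\<in>PiE A F \<times> PiE B F. f (mg p))"
    by (rule sum.reindex_bij_betw[OF bij, symmetric])
  also have "\<dots> = (\<Sum>\<rho>1\<in>PiE A F. \<Sum>\<rho>2\<in>PiE B F. f (mg (\<rho>1, \<rho>2)))"
    by (simp add: sum.cartesian_product split_def)
  finally show ?thesis unfolding mg_def by simp
qed

lemma annT_union: "annT W M (A \<union> B) \<rho> = annT (annT W M A \<rho>) M B \<rho>"
  by (auto simp: annT_def)

lemma annT_cong: "(\<And>t. t \<in> T \<Longrightarrow> \<rho> t = \<rho>' t) \<Longrightarrow> annT W M T \<rho> = annT W M T \<rho>'"
  unfolding annT_def by auto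

lemma Prank_vanish: "a < r \<Longrightarrow> Prank q r a b = 0"
proof -
  assume ar: "a < r"
  have "(\<Prod>i<r. 1 - real q powi (int i - int a)) = 0"
    by (rule prod_zero) (use ar in \<open>auto intro!: bexI[of _ a]\<close>)
  then show ?thesis by (simp add: Prank_def)
qed

lemma zero_in_annT: "subsp n W \<Longrightarrow> M \<in> carrier_mat m n \<Longrightarrow> (\<And>t. t \<in> T \<Longrightarrow> \<rho> t \<in> carrier_vec m) \<Longrightarrow> 0\<^sub>v n \<in> annT W M T \<rho>"
  unfolding annT_def subsp_def by (auto simp: mat_vec_zero)

lemma Pfull0_cl:
  fixes A :: "'a::{field,finite} vec set"
  assumes "card A = card (UNIV::'a set) ^ cl A" "z \<in> A"
  shows "Pfull (card (UNIV::'a set)) 0 (cl A) = (if A = {z} then 1 else 0)"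
proof (cases "A = {z}")
  case True
  then have "card A = card (UNIV::'a set) ^ 0" by simp
  then have "cl A = 0" by (rule cl_eq)
  then show ?thesis using True by simp
next
  case False
  have q1: "1 < card (UNIV::'a set)" using card_field_ge2[where 'a='a] by simp
  have "cl A \<noteq> 0"
  proof
    assume "cl A = 0"
    then have "card A = 1" using assms(1) by simp
    then obtain y where "A = {y}" by (rule card_1_singletonE)
    then show False using False assms(2) by simp
  qed
  then show ?thesis using False by (simp add: Pfull_zero_arg)
qed

lemma real_card_filter: "finite A \<Longrightarrow> real (card {x\<in>A. P x}) = (\<Sum>x\<in>A. if P x then 1 else 0)"
proof -
  assume fA: "finite A"
  have "card {x\<in>A. P x} = (\<Sum>x\<in>A. if P x then 1 else (0::nat))" using fA by (rule card_filter_sum)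
  then have "real (card {x\<in>A. P x}) = real (\<Sum>x\<in>A. if P x then 1 else (0::nat))" by simp
  also have "\<dots> = (\<Sum>x\<in>A. if P x then 1 else 0)" by (simp add: of_nat_sum if_distrib cong: if_cong)
  finally show ?thesis .
qed

theorem lemma2:
  fixes K L NS NR :: nat
    and DS :: "nat set"            \<comment> \<open>source packets received directly by D\<close>
    and RS :: "nat \<Rightarrow> nat set"     \<comment> \<open>source packets received by relay j\<close>
    and RD :: "nat \<Rightarrow> nat set"     \<comment> \<open>recoded packets of relay j received by D\<close>
  assumes "K \<ge> 1" and "L \<ge> 1" and "NS \<ge> K" and "NR \<ge> 1"
    and "DS \<subseteq> {..<NS}"
    and "\<And>j. j < L \<Longrightarrow> RS j \<subseteq> {..<NS}"
    and "\<And>j. j < L \<Longrightarrow> RD j \<subseteq> {..<NR}"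
  shows "prob_X TYPE('a::{field,finite}) K L NS NR DS RS RD
    \<le> P2 (card (UNIV :: 'a set))
         ((\<Sum>j<L. card (RD j)) + card DS)
         (card (\<Union>j<L. RS j) - card ((\<Union>j<L. RS j) \<inter> DS) + card DS)
         (card DS) K"
proof -
  let ?q = "card (UNIV::'a set)"
  have q2: "?q \<ge> 2" by (rule card_field_ge2)
  define V where "V = (carrier_vec K :: 'a vec set)"
  define Mats where "Mats = (carrier_mat NS K :: 'a mat set)"
  define mm where "mm = (\<lambda>j. card (RS j))"
  define Gs where "Gs = (PiE {..<L} (\<lambda>j. carrier_mat NR (mm j)) :: (nat \<Rightarrow> 'a mat) set)"
  define U where "U = (\<Union>j<L. RS j)"
  define Bs where "Bs = U - DS"
  define R where "R = {..<NS} - DS"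
  define m' where "m' = (\<Sum>j<L. card (RD j))"
  define X where "X = (\<lambda>C (G::nat \<Rightarrow> 'a mat). (let CD = dest_mat K L DS RS RD C G in vec_space.rank (dim_row CD) CD = K))"
  define I1 where "I1 = (1\<^sub>m K :: 'a mat)"
  define W where "W = (\<lambda>C. annT V I1 DS (rowsf NS C))"
  define WDU where "WDU = (\<lambda>C. annT V I1 (DS \<union> Bs) (rowsf NS C))"
  define AL where "AL = (\<lambda>C G. annL (W C) (\<lambda>j. relay_in C (RS j)) RD {..<L} G)"
  define F where "F = (\<lambda>c. Pfull ?q m' c * Pfull ?q (card Bs) c)"
  define S where "S = (\<Sum>c\<in>{..K}. F c * Prank ?q (K - c) (card DS) K)"
  have Uin: "U \<subseteq> {..<NS}" using assms(6) unfolding U_def by auto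
  have finU: "finite U" using Uin finite_subset by blast
  have finDS: "finite DS" using assms(5) finite_subset by blast
  have BsR: "Bs \<subseteq> R" unfolding Bs_def R_def using Uin by auto
  have finR: "finite R" unfolding R_def by simp
  have DSR: "DS \<inter> R = {}" "DS \<union> R = {..<NS}" using assms(5) unfolding R_def by auto
  have cardR: "card DS + card R = NS" using DSR finDS finR by (metis card_Un_disjoint card_lessThan)
  have SV: "subsp K V" unfolding V_def by (rule subsp_carrier)
  have cV: "card V = ?q ^ K" unfolding V_def by (rule card_cv)
  have I1c: "I1 \<in> carrier_mat K K" unfolding I1_def by simp
  have rowsC: "rowsf NS C t \<in> carrier_vec K \<and> rowsf NS C t = row C t" if "C \<in> Mats" "t < NS" for C t
    using that unfolding rowsf_def Mats_def by auto
  have finMats: "finite Mats" unfolding Mats_def by (rule finite_cm)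
  have finGs: "finite Gs" unfolding Gs_def by (intro finite_PiE finite_cm) auto
  have cardGs: "card Gs = (\<Prod>j<L. ?q ^ (mm j * NR))" unfolding Gs_def by (simp add: card_PiE card_cm)
  have cardMats: "card Mats = ?q ^ (K * NS)" unfolding Mats_def by (rule card_cm)
  have invW: "subsp K (W C) \<and> card (W C) = ?q ^ cl (W C)" if C: "C \<in> Mats" for C
    unfolding W_def
    by (rule annT_inv[OF finDS SV cV I1c]) (use rowsC[OF C] assms(5) in auto)
  have stepA: "WDU C = {0\<^sub>v K} \<and> AL C G = {0\<^sub>v K}" if C: "C \<in> Mats" and G: "G \<in> Gs" and XC: "X C G" for C G
  proof -
    have Cc: "C \<in> carrier_mat NS K" using C unfolding Mats_def .
    have Gc: "\<And>j. j < L \<Longrightarrow> G j \<in> carrier_mat NR (card (RS j))" using G unfolding Gs_def mm_def by auto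
    have z1: "0\<^sub>v K \<in> WDU C" unfolding WDU_def
      by (rule zero_in_annT[OF SV I1c]) (use rowsC[OF C] assms(5) Uin in \<open>auto simp: Bs_def\<close>)
    have z2: "0\<^sub>v K \<in> AL C G"
    proof -
      have "\<forall>j\<in>{..<L}. \<forall>t\<in>RD j. row (G j) t \<bullet> (relay_in C (RS j) *\<^sub>v 0\<^sub>v K) = 0"
      proof (intro ballI)
        fix j t assume j: "j \<in> {..<L}" and t: "t \<in> RD j"
        have jL: "j < L" using j by simp
        have Cj: "relay_in C (RS j) \<in> carrier_mat (card (RS j)) K"
          using submatrix_carrier_UNIV[of C "RS j"] Cc card_lt_in[OF assms(6)[OF jL]] unfolding relay_in_def by simp
        have "relay_in C (RS j) *\<^sub>v 0\<^sub>v K = 0\<^sub>v (card (RS j))" by (rule mat_vec_zero[OF Cj])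
        moreover have "row (G j) t \<in> carrier_vec (card (RS j))" using Gc[OF jL] assms(7)[OF jL] t by auto
        ultimately show "row (G j) t \<bullet> (relay_in C (RS j) *\<^sub>v 0\<^sub>v K) = 0" by simp
      qed
      then show ?thesis using invW[OF C] unfolding AL_def annL_def subsp_def by auto
    qed
    have "WDU C \<subseteq> {0\<^sub>v K}"
    proof
      fix x assume x: "x \<in> WDU C"
      have xV: "x \<in> carrier_vec K" using x unfolding WDU_def annT_def V_def by auto
      have hx: "row C i \<bullet> x = 0" if "i \<in> DS \<union> Bs" "i < NS" for i
      proof -
        have "rowsf NS C i \<bullet> x = 0" using x that xV unfolding WDU_def annT_def I1_def by auto
        then show ?thesis using rowsC[OF C that(2)] by simp
      qed
      show "x \<in> {0\<^sub>v K}"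
      proof (rule ccontr)
        assume nz: "x \<notin> {0\<^sub>v K}"
        have "\<not> X C G" unfolding X_def
        proof (rule not_X[OF Cc Gc assms(6) xV])
          show "x \<noteq> 0\<^sub>v K" using nz by simp
          show "\<And>i. i \<in> DS \<Longrightarrow> i < NS \<Longrightarrow> row C i \<bullet> x = 0" using hx by auto
          fix j t assume j: "j < L" and t: "t \<in> RD j" "t < NR"
          have Cjz: "relay_in C (RS j) *\<^sub>v x = 0\<^sub>v (dim_row (relay_in C (RS j)))"
            unfolding relay_in_def
          proof (rule submatrix_mult_zero)
            show "x \<in> carrier_vec (dim_col C)" using xV Cc by simp
            fix i assume "i \<in> RS j" "i < dim_row C"
            then have "i \<in> DS \<union> Bs" "i < NS" using j Cc unfolding Bs_def U_def by auto
            then show "row C i \<bullet> x = 0" by (rule hx)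
          qed
          have "dim_row (relay_in C (RS j)) = card (RS j)"
            using Cc card_lt_in[OF assms(6)[OF j]] unfolding relay_in_def by (simp add: dim_submatrix)
          moreover have "row (G j) t \<in> carrier_vec (card (RS j))" using Gc[OF j] t by auto
          ultimately show "row (G j) t \<bullet> (relay_in C (RS j) *\<^sub>v x) = 0" using Cjz by simp
        qed
        then show False using XC by simp
      qed
    qed
    moreover have "AL C G \<subseteq> {0\<^sub>v K}"
    proof
      fix x assume x: "x \<in> AL C G"
      have xW: "x \<in> W C" using x unfolding AL_def annL_def by auto
      have xV: "x \<in> carrier_vec K" using xW unfolding W_def annT_def V_def by auto
      show "x \<in> {0\<^sub>v K}"
      proof (rule ccontr)
        assume nz: "x \<notin> {0\<^sub>v K}"
        have "\<not> X C G" unfolding X_def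
        proof (rule not_X[OF Cc Gc assms(6) xV])
          show "x \<noteq> 0\<^sub>v K" using nz by simp
          fix i assume i: "i \<in> DS" "i < NS"
          have "rowsf NS C i \<bullet> x = 0" using xW i xV unfolding W_def annT_def I1_def by auto
          then show "row C i \<bullet> x = 0" using rowsC[OF C i(2)] by simp
        next
          show "\<And>j t. j < L \<Longrightarrow> t \<in> RD j \<Longrightarrow> t < NR \<Longrightarrow> row (G j) t \<bullet> (relay_in C (RS j) *\<^sub>v x) = 0"
            using x unfolding AL_def annL_def by auto
        qed
        then show False using XC by simp
      qed
    qed
    ultimately show ?thesis using z1 z2 by auto
  qed
  have cl0: "cl {0\<^sub>v K :: 'a vec} = 0" by (rule cl_eq) simp
  have stepB: "real (card {G\<in>Gs. X C G}) \<le> Pfull ?q 0 (cl (WDU C)) * (real (card Gs) * Pfull ?q m' (cl (W C)))"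
    if C: "C \<in> Mats" for C
  proof -
    have Cc: "C \<in> carrier_mat NS K" using C unfolding Mats_def .
    have "real (card {G\<in>Gs. X C G}) = (\<Sum>G\<in>Gs. if X C G then 1 else 0)" by (rule real_card_filter[OF finGs])
    also have "\<dots> \<le> (\<Sum>G\<in>Gs. Pfull ?q 0 (cl (WDU C)) * Pfull ?q 0 (cl (AL C G)))"
    proof (rule sum_mono)
      fix G assume G: "G \<in> Gs"
      show "(if X C G then 1 else 0) \<le> Pfull ?q 0 (cl (WDU C)) * Pfull ?q 0 (cl (AL C G))"
      proof (cases "X C G")
        case True
        then show ?thesis using stepA[OF C G] cl0 by simp
      next
        case False
        have "0 \<le> Pfull ?q 0 (cl (WDU C)) * Pfull ?q 0 (cl (AL C G))"
          using q2 by (intro mult_nonneg_nonneg Pfull_nonneg) auto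
        then show ?thesis using False by simp
      qed
    qed
    also have "\<dots> = Pfull ?q 0 (cl (WDU C)) * (\<Sum>G\<in>Gs. Pfull ?q 0 (cl (AL C G)))"
      by (simp add: sum_distrib_left)
    also have "\<dots> \<le> Pfull ?q 0 (cl (WDU C)) * (real (card Gs) * Pfull ?q m' (cl (W C)))"
    proof (rule mult_left_mono)
      show "0 \<le> Pfull ?q 0 (cl (WDU C))" using q2 by (intro Pfull_nonneg) auto
      have "(\<Sum>G\<in>Gs. Pfull ?q 0 (cl (AL C G)))
          \<le> real (\<Prod>j\<in>{..<L}. ?q ^ (mm j * NR)) * Pfull ?q (0 + (\<Sum>j\<in>{..<L}. card (RD j))) (cl (W C))"
        unfolding Gs_def AL_def
      proof (rule chainL[where n=K])
        show "finite {..<L}" by simp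
        fix j assume "j \<in> {..<L}"
        then have j: "j < L" by simp
        show "relay_in C (RS j) \<in> carrier_mat (mm j) K \<and> RD j \<subseteq> {..<NR}"
          using submatrix_carrier_UNIV[of C "RS j"] Cc card_lt_in[OF assms(6)[OF j]] assms(7)[OF j]
          unfolding relay_in_def mm_def by simp
      next
        show "subsp K (W C)" using invW[OF C] by simp
        show "card (W C) = ?q ^ cl (W C)" using invW[OF C] by simp
      qed
      then show "(\<Sum>G\<in>Gs. Pfull ?q 0 (cl (AL C G))) \<le> real (card Gs) * Pfull ?q m' (cl (W C))"
        unfolding cardGs m'_def by simp
    qed
    finally show ?thesis .
  qed
  have om_eq: "(outcomes K L NS NR RS :: ('a mat \<times> (nat \<Rightarrow> 'a mat)) set) = Mats \<times> Gs"
    unfolding outcomes_def Mats_def Gs_def mm_def ..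
  have set_eq: "{(C, G) \<in> (outcomes K L NS NR RS :: ('a mat \<times> (nat \<Rightarrow> 'a mat)) set).
                   (let CD = dest_mat K L DS RS RD C G in vec_space.rank (dim_row CD) CD = K)}
       = Sigma Mats (\<lambda>C. {G\<in>Gs. X C G})"
    unfolding om_eq X_def by auto
  have probeq: "prob_X TYPE('a) K L NS NR DS RS RD = real (card (Sigma Mats (\<lambda>C. {G\<in>Gs. X C G}))) / real (card (Mats \<times> Gs))"
  proof -
    have a: "prob_X TYPE('a) K L NS NR DS RS RD = real (card {(C, G). (C, G) \<in> Mats \<times> Gs \<and> X C G}) / real (card (Mats \<times> Gs))"
      unfolding prob_X_def om_eq X_def ..
    have b: "{(C, G). (C, G) \<in> Mats \<times> Gs \<and> X C G} = Sigma Mats (\<lambda>C. {G\<in>Gs. X C G})" by auto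
    show ?thesis unfolding a b ..
  qed
  have cS: "real (card (Sigma Mats (\<lambda>C. {G\<in>Gs. X C G}))) = (\<Sum>C\<in>Mats. real (card {G\<in>Gs. X C G}))"
  proof -
    have "card (Sigma Mats (\<lambda>C. {G\<in>Gs. X C G})) = (\<Sum>C\<in>Mats. card {G\<in>Gs. X C G})"
      using finMats finGs by (intro card_SigmaI) auto
    then show ?thesis by (simp add: of_nat_sum)
  qed
  define H where "H = (\<lambda>\<rho>. Pfull ?q 0 (cl (annT V I1 (DS \<union> Bs) \<rho>)) * Pfull ?q m' (cl (annT V I1 DS \<rho>)))"
  have le1: "real (card (Sigma Mats (\<lambda>C. {G\<in>Gs. X C G}))) \<le> real (card Gs) * (\<Sum>C\<in>Mats. H (rowsf NS C))"
  proof -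
    have "(\<Sum>C\<in>Mats. real (card {G\<in>Gs. X C G})) \<le> (\<Sum>C\<in>Mats. Pfull ?q 0 (cl (WDU C)) * (real (card Gs) * Pfull ?q m' (cl (W C))))"
      by (rule sum_mono) (rule stepB)
    also have "\<dots> = real (card Gs) * (\<Sum>C\<in>Mats. H (rowsf NS C))"
      unfolding H_def WDU_def W_def by (simp add: sum_distrib_left algebra_simps)
    finally show ?thesis unfolding cS .
  qed
  have stepD: "(\<Sum>C\<in>Mats. H (rowsf NS C)) = real (?q ^ (K * NS)) * S"
  proof -
    have "(\<Sum>C\<in>Mats. H (rowsf NS C)) = (\<Sum>\<rho>\<in>PiE {..<NS} (\<lambda>_. V). H \<rho>)"
      unfolding Mats_def V_def by (rule sum.reindex_bij_betw[OF rowsf_bij])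
    also have "\<dots> = (\<Sum>\<rho>\<in>PiE (DS \<union> R) (\<lambda>_. V). H \<rho>)" unfolding DSR(2) ..
    also have "\<dots> = (\<Sum>\<rho>1\<in>PiE DS (\<lambda>_. V). \<Sum>\<rho>2\<in>PiE R (\<lambda>_. V). H (\<lambda>i. if i \<in> DS then \<rho>1 i else \<rho>2 i))"
      by (rule sum_PiE_split[OF DSR(1) finDS finR])
    also have "\<dots> = (\<Sum>\<rho>1\<in>PiE DS (\<lambda>_. V). real (?q ^ (K * card R)) * F (cl (annT V I1 DS \<rho>1)))"
    proof (rule sum.cong[OF refl])
      fix \<rho>1 assume r1: "\<rho>1 \<in> PiE DS (\<lambda>_. V)"
      let ?W1 = "annT V I1 DS \<rho>1"
      have inv1: "subsp K ?W1 \<and> card ?W1 = ?q ^ cl ?W1"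
        by (rule annT_inv[OF finDS SV cV I1c]) (use r1 in \<open>auto simp: V_def\<close>)
      have e: "H (\<lambda>i. if i \<in> DS then \<rho>1 i else \<rho>2 i) = Pfull ?q 0 (cl (annT ?W1 I1 Bs \<rho>2)) * Pfull ?q m' (cl ?W1)" for \<rho>2
      proof -
        let ?mg = "\<lambda>i. if i \<in> DS then \<rho>1 i else \<rho>2 i"
        have e1: "annT V I1 DS ?mg = ?W1" by (rule annT_cong) simp
        have e2: "annT V I1 (DS \<union> Bs) ?mg = annT ?W1 I1 Bs \<rho>2"
          unfolding annT_union e1 by (rule annT_cong) (simp add: Bs_def)
        show ?thesis unfolding H_def e1 e2 ..
      qed
      have "(\<Sum>\<rho>2\<in>PiE R (\<lambda>_. V). H (\<lambda>i. if i \<in> DS then \<rho>1 i else \<rho>2 i))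
          = (\<Sum>\<rho>2\<in>PiE R (\<lambda>_. V). Pfull ?q 0 (cl (annT ?W1 I1 Bs \<rho>2))) * Pfull ?q m' (cl ?W1)"
        unfolding e by (simp add: sum_distrib_right)
      also have "(\<Sum>\<rho>2\<in>PiE R (\<lambda>_. V). Pfull ?q 0 (cl (annT ?W1 I1 Bs \<rho>2))) = real (?q ^ (K * card R)) * Pfull ?q (0 + card Bs) (cl ?W1)"
        unfolding V_def I1_def by (rule chainC[OF finR BsR]) (use inv1 in \<open>auto simp: I1_def V_def\<close>)
      finally show "(\<Sum>\<rho>2\<in>PiE R (\<lambda>_. V). H (\<lambda>i. if i \<in> DS then \<rho>1 i else \<rho>2 i)) = real (?q ^ (K * card R)) * F (cl ?W1)"
        unfolding F_def by (simp add: algebra_simps)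
    qed
    also have "\<dots> = real (?q ^ (K * card R)) * (\<Sum>\<rho>1\<in>PiE DS (\<lambda>_. V). F (cl (annT V I1 DS \<rho>1)))"
      by (simp add: sum_distrib_left)
    also have "(\<Sum>\<rho>1\<in>PiE DS (\<lambda>_. V). F (cl (annT V I1 DS \<rho>1)))
        = (\<Sum>c\<in>{..K}. F c * (\<Sum>\<rho>1\<in>PiE DS (\<lambda>_. V). if cl (annT V I1 DS \<rho>1) = c then 1 else 0))"
    proof (rule sum_group)
      show "finite (PiE DS (\<lambda>_. V))" using finDS unfolding V_def by (intro finite_PiE) auto
      fix \<rho>1 assume r1: "\<rho>1 \<in> PiE DS (\<lambda>_. V)"
      have inv1: "subsp K (annT V I1 DS \<rho>1) \<and> card (annT V I1 DS \<rho>1) = ?q ^ cl (annT V I1 DS \<rho>1)"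
        by (rule annT_inv[OF finDS SV cV I1c]) (use r1 in \<open>auto simp: V_def\<close>)
      show "cl (annT V I1 DS \<rho>1) \<le> K" using inv1 by (intro cl_le[of K]) auto
    qed
    also have "\<dots> = (\<Sum>c\<in>{..K}. F c * (real (?q ^ (K * card DS)) * Prank ?q (K - c) (card DS) K))"
    proof (rule sum.cong[OF refl])
      fix c assume "c \<in> {..K}"
      then have cK: "c \<le> K" by simp
      have "(\<Sum>\<rho>1\<in>PiE DS (\<lambda>_. V). if cl (annT V I1 DS \<rho>1) = c then 1 else (0::real))
          = real (?q ^ (K * card DS)) * Prank ?q (K - c) (card DS) K"
        using dist[OF finDS, where n=K and 'a='a] cK unfolding V_def I1_def by blast
      then show "F c * (\<Sum>\<rho>1\<in>PiE DS (\<lambda>_. V). if cl (annT V I1 DS \<rho>1) = c then 1 else 0)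
          = F c * (real (?q ^ (K * card DS)) * Prank ?q (K - c) (card DS) K)" by simp
    qed
    also have "\<dots> = real (?q ^ (K * card DS)) * S"
      unfolding S_def by (simp add: sum_distrib_left algebra_simps)
    finally have "(\<Sum>C\<in>Mats. H (rowsf NS C)) = real (?q ^ (K * card R)) * (real (?q ^ (K * card DS)) * S)" .
    also have "\<dots> = real (?q ^ (K * NS)) * S"
    proof -
      have e: "K * card R + K * card DS = K * NS" using cardR by (metis add.commute add_mult_distrib2)
      have "real (?q ^ (K * card R)) * (real (?q ^ (K * card DS)) * S) = real (?q ^ (K * card R + K * card DS)) * S"
        by (simp add: power_add)
      then show ?thesis unfolding e .
    qed
    finally show ?thesis .
  qed
  have GsNE: "Gs \<noteq> {}"
  proof -
    have "(\<lambda>j. if j < L then 0\<^sub>m NR (mm j) else undefined) \<in> Gs" unfolding Gs_def by auto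
    then show ?thesis by auto
  qed
  have cGs: "card Gs > 0" using finGs GsNE by (simp add: card_gt_0_iff)
  have pos: "real (card (Mats \<times> Gs)) > 0" using cGs cardMats q2 by (simp add: card_cartesian_product)
  have leS: "prob_X TYPE('a) K L NS NR DS RS RD \<le> S"
  proof -
    have "real (card (Sigma Mats (\<lambda>C. {G\<in>Gs. X C G}))) \<le> real (card (Mats \<times> Gs)) * S"
      using le1 stepD cardMats by (simp add: card_cartesian_product algebra_simps)
    then show ?thesis unfolding probeq using pos by (simp add: divide_le_eq mult.commute)
  qed
  have cBs: "card Bs = card U - card (U \<inter> DS)" unfolding Bs_def using finU by (intro card_Diff_subset_Int) auto
  have S_eq: "S = P2 ?q (m' + card DS) (card U - card (U \<inter> DS) + card DS) (card DS) K"
  proof -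
    define T where "T = (\<lambda>i. Prank ?q i (card DS) K * Pfull ?q m' (K - i) * Pfull ?q (card Bs) (K - i))"
    have "S = (\<Sum>i\<in>{..K}. T i)"
      unfolding S_def
    proof (rule sum.reindex_bij_witness[where i="\<lambda>i. K - i" and j="\<lambda>c. K - c"])
      fix c assume "c \<in> {..K}" then show "K - (K - c) = c" "K - c \<in> {..K}" by auto
    next
      fix c assume "c \<in> {..K}" then show "T (K - c) = F c * Prank ?q (K - c) (card DS) K"
        unfolding T_def F_def by (simp add: algebra_simps)
    qed auto
    also have "\<dots> = (\<Sum>i\<in>{i. i \<le> min (card DS) K \<and> int K - int (m' + card DS) + int (card DS) \<le> int i
                \<and> int K - int (card U - card (U \<inter> DS) + card DS) + int (card DS) \<le> int i}. T i)"
    proof (rule sum.mono_neutral_right)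
      show "finite {..K}" by simp
      show "{i. i \<le> min (card DS) K \<and> int K - int (m' + card DS) + int (card DS) \<le> int i
                \<and> int K - int (card U - card (U \<inter> DS) + card DS) + int (card DS) \<le> int i} \<subseteq> {..K}" by auto
      show "\<forall>i\<in>{..K} - {i. i \<le> min (card DS) K \<and> int K - int (m' + card DS) + int (card DS) \<le> int i
                \<and> int K - int (card U - card (U \<inter> DS) + card DS) + int (card DS) \<le> int i}. T i = 0"
      proof
        fix i assume i: "i \<in> {..K} - {i. i \<le> min (card DS) K \<and> int K - int (m' + card DS) + int (card DS) \<le> int i
                \<and> int K - int (card U - card (U \<inter> DS) + card DS) + int (card DS) \<le> int i}"
        then have iK: "i \<le> K" by simp
        have "\<not> i \<le> card DS \<or> \<not> int K - int m' \<le> int i \<or> \<not> int K - int (card Bs) \<le> int i"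
          using i iK cBs by auto
        then show "T i = 0"
        proof (elim disjE)
          assume "\<not> i \<le> card DS"
          then show ?thesis unfolding T_def by (simp add: Prank_vanish)
        next
          assume "\<not> int K - int m' \<le> int i"
          then have "m' < K - i" by simp
          then show ?thesis unfolding T_def by (simp add: Pfull_vanish)
        next
          assume "\<not> int K - int (card Bs) \<le> int i"
          then have "card Bs < K - i" by simp
          then show ?thesis unfolding T_def by (simp add: Pfull_vanish)
        qed
      qed
    qed
    also have "\<dots> = P2 ?q (m' + card DS) (card U - card (U \<inter> DS) + card DS) (card DS) K"
      unfolding P2_def T_def cBs by simp
    finally show ?thesis .
  qed
  show ?thesis using leS S_eq unfolding m'_def U_def by simp
qed

end
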